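(* Let $n\ge 1$ and $m\ge 1$ be integers and let $H_m(\mathbb B)$ be the analytic functional Hilbert space on the open unit ball $\mathbb B\subset\mathbb C^n$ with reproducing kernel $K_m(z,w)=(1-\langle z,w\rangle)^{-m}$. Let $T\in L(H_m(\mathbb B))$ satisfy \[ M^{\prime *}_zTM^\prime_z = P_{{\rm Im}M^*_z}\Big(\oplus \sum^{m-1}_{j=0}(-1)^j\binom{m}{j+1}\sigma^j_{M_z}(T)\Big)P_{{\rm Im}M^*_z}. \] Then for every $k\in\mathbb Z$ the operator $T_k=\frac{1}{2\pi}\int_0^{2\pi}e^{-ikt}U(t)TU(t)^*\,dt$ satisfies the same identity, i.e. \[ M^{\prime *}_zT_kM^\prime_z = P_{{\rm Im}M^*_z}\Big(\oplus \sum^{m-1}_{j=0}(-1)^j\binom{m}{j+1}\sigma^j_{M_z}(T_k)\Big)P_{{\rm Im}M^*_z}. \]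
   Context: $H_m(\mathbb B)=\{f=\sum_{\alpha\in\mathbb N^n}f_\alpha z^\alpha\in\mathcal O(\mathbb B):\ \|f\|^2=\sum_\alpha |f_\alpha|^2/\rho_m(\alpha)<\infty\}$ with $\rho_m(\alpha)=\frac{(m+|\alpha|-1)!}{\alpha!(m-1)!}$. Let $\mathbb H_k$ denote the space of homogeneous polynomials of degree $k$, so $H_m(\mathbb B)$ is the orthogonal sum of the $\mathbb H_k$, and every $f$ has homogeneous expansion $f=\sum_k f_k$, $f_k\in\mathbb H_k$. $M_z:H_m(\mathbb B)^n\to H_m(\mathbb B)$, $(f_i)\mapsto\sum_i z_if_i$, is the row multiplication operator (it has closed range), $M_z^*:H_m(\mathbb B)\to H_m(\mathbb B)^n$, $f\mapsto (M_{z_i}^*f)_i$, is its adjoint, and $P_{{\rm Im}M_z^*}$ is the orthogonal projection of $H_m(\mathbb B)^n$ onto the closed range of $M_z^*$. Let $\delta\in L(H_m(\mathbb B))$ be the diagonal operator $\delta(\sum_k f_k)=f_0+\sum_{k\ge1}\frac{m+k-1}{k}f_k$, and define $M_z'=\delta M_z:H_m(\mathbb B)^n\to H_m(\mathbb B)$, with adjoint $M_z'^*$. For $X\in L(H_m(\mathbb B))$, $\sigma_{M_z}(X)=\sum_{i=1}^n M_{z_i}XM_{z_i}^*$, $\sigma^j_{M_z}$ is its $j$-th iterate ($\sigma^0_{M_z}(X)=X$), and $\oplus X$ denotes $X\oplus\cdots\oplus X$ ($n$ copies) on $H_m(\mathbb B)^n$. $U(t)\in L(H_m(\mathbb B))$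 is the unitary $(U(t)f)(z)=f(e^{it}z)$, $t\in\mathbb R$; the integral defining $T_k$ is a weak operator integral: $\langle T_kf,g\rangle=\frac1{2\pi}\int_0^{2\pi}e^{-ikt}\langle U(t)TU(t)^*f,g\rangle dt$. *)

theory Defs
  imports "HOL-Analysis.Analysis"
begin

text \<open>Concrete model of H_m(B): an element f = sum f_alpha z^alpha is represented by its
  coefficient function on multi-indices alpha in N^n (functions nat => nat vanishing at
  indices >= n); coefficients outside that set are 0.\<close>

type_synonym mi = "nat \<Rightarrow> nat"
type_synonym hel = "mi \<Rightarrow> complex"
type_synonym hvec = "nat \<Rightarrow> hel"

definition MI :: "nat \<Rightarrow> mi set" where
  "MI n = {\<alpha>. \<forall>i\<ge>n. \<alpha> i = 0}"

definition mlen :: "nat \<Rightarrow> mi \<Rightarrow> nat" where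
  "mlen n \<alpha> = (\<Sum>i<n. \<alpha> i)"

definition rho :: "nat \<Rightarrow> nat \<Rightarrow> mi \<Rightarrow> real" where
  "rho n m \<alpha> = fact (m + mlen n \<alpha> - 1) / ((\<Prod>i<n. fact (\<alpha> i)) * fact (m - 1))"

definition Hm :: "nat \<Rightarrow> nat \<Rightarrow> hel set" where
  "Hm n m = {f. (\<forall>\<alpha>. \<alpha> \<notin> MI n \<longrightarrow> f \<alpha> = 0) \<and>
                (\<lambda>\<alpha>. (cmod (f \<alpha>))\<^sup>2 / rho n m \<alpha>) summable_on MI n}"

definition ipH :: "nat \<Rightarrow> nat \<Rightarrow> hel \<Rightarrow> hel \<Rightarrow> complex" where
  "ipH n m f g = (\<Sum>\<^sub>\<infinity>\<alpha>\<in>MI n. f \<alpha> * cnj (g \<alpha>) / complex_of_real (rho n m \<alpha>))"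

definition Hmn :: "nat \<Rightarrow> nat \<Rightarrow> hvec set" where
  "Hmn n m = {F. (\<forall>i\<ge>n. F i = (\<lambda>_. 0)) \<and> (\<forall>i<n. F i \<in> Hm n m)}"

definition ipHn :: "nat \<Rightarrow> nat \<Rightarrow> hvec \<Rightarrow> hvec \<Rightarrow> complex" where
  "ipHn n m F G = (\<Sum>i<n. ipH n m (F i) (G i))"

definition bounded_op :: "nat \<Rightarrow> nat \<Rightarrow> (hel \<Rightarrow> hel) \<Rightarrow> bool" where
  "bounded_op n m T \<longleftrightarrow>
     (\<forall>f\<in>Hm n m. T f \<in> Hm n m) \<and>
     (\<forall>f\<in>Hm n m. \<forall>g\<in>Hm n m. T (\<lambda>\<alpha>. f \<alpha> + g \<alpha>) = (\<lambda>\<alpha>. T f \<alpha> + T g \<alpha>)) \<and>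
     (\<forall>c. \<forall>f\<in>Hm n m. T (\<lambda>\<alpha>. c * f \<alpha>) = (\<lambda>\<alpha>. c * T f \<alpha>)) \<and>
     (\<exists>C. \<forall>f\<in>Hm n m. Re (ipH n m (T f) (T f)) \<le> C * Re (ipH n m f f))"

definition adj :: "'a set \<Rightarrow> ('a \<Rightarrow> 'a \<Rightarrow> complex) \<Rightarrow> 'b set \<Rightarrow> ('b \<Rightarrow> 'b \<Rightarrow> complex)
                    \<Rightarrow> ('a \<Rightarrow> 'b) \<Rightarrow> ('b \<Rightarrow> 'a)" where
  "adj S1 ip1 S2 ip2 A = (SOME B. (\<forall>y\<in>S2. B y \<in> S1) \<and>
                                  (\<forall>x\<in>S1. \<forall>y\<in>S2. ip2 (A x) y = ip1 x (B y)))"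

text \<open>Multiplication by z_i: (z_i f)_alpha = f_(alpha - e_i) if alpha_i > 0, else 0.\<close>
definition Mzi :: "nat \<Rightarrow> hel \<Rightarrow> hel" where
  "Mzi i f = (\<lambda>\<alpha>. if 0 < \<alpha> i then f (\<alpha>(i := \<alpha> i - 1)) else 0)"

definition Mzi_adj :: "nat \<Rightarrow> nat \<Rightarrow> nat \<Rightarrow> hel \<Rightarrow> hel" where
  "Mzi_adj n m i = adj (Hm n m) (ipH n m) (Hm n m) (ipH n m) (Mzi i)"

definition Mz :: "nat \<Rightarrow> hvec \<Rightarrow> hel" where
  "Mz n F = (\<lambda>\<alpha>. \<Sum>i<n. Mzi i (F i) \<alpha>)"

definition Mz_adj :: "nat \<Rightarrow> nat \<Rightarrow> hel \<Rightarrow> hvec" where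
  "Mz_adj n m f = (\<lambda>i. if i < n then Mzi_adj n m i f else (\<lambda>_. 0))"

definition delta :: "nat \<Rightarrow> nat \<Rightarrow> hel \<Rightarrow> hel" where
  "delta n m f = (\<lambda>\<alpha>. if mlen n \<alpha> = 0 then f \<alpha>
        else (of_nat (m + mlen n \<alpha> - 1) / of_nat (mlen n \<alpha>)) * f \<alpha>)"

definition Mz' :: "nat \<Rightarrow> nat \<Rightarrow> hvec \<Rightarrow> hel" where
  "Mz' n m F = delta n m (Mz n F)"

definition Mz'_adj :: "nat \<Rightarrow> nat \<Rightarrow> hel \<Rightarrow> hvec" where
  "Mz'_adj n m = adj (Hmn n m) (ipHn n m) (Hm n m) (ipH n m) (Mz' n m)"

definition ImMz_adj :: "nat \<Rightarrow> nat \<Rightarrow> hvec set" where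
  "ImMz_adj n m = Mz_adj n m ` Hm n m"

definition projIm :: "nat \<Rightarrow> nat \<Rightarrow> hvec \<Rightarrow> hvec" where
  "projIm n m F = (SOME G. G \<in> ImMz_adj n m \<and>
      (\<forall>K\<in>ImMz_adj n m. ipHn n m (\<lambda>i \<alpha>. F i \<alpha> - G i \<alpha>) K = 0))"

definition sigma :: "nat \<Rightarrow> nat \<Rightarrow> (hel \<Rightarrow> hel) \<Rightarrow> (hel \<Rightarrow> hel)" where
  "sigma n m X = (\<lambda>f \<alpha>. \<Sum>i<n. Mzi i (X (Mzi_adj n m i f)) \<alpha>)"

definition oplus :: "nat \<Rightarrow> (hel \<Rightarrow> hel) \<Rightarrow> hvec \<Rightarrow> hvec" where
  "oplus n X = (\<lambda>F i. if i < n then X (F i) else (\<lambda>_. 0))"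

definition combo :: "nat \<Rightarrow> nat \<Rightarrow> (hel \<Rightarrow> hel) \<Rightarrow> (hel \<Rightarrow> hel)" where
  "combo n m X = (\<lambda>f \<alpha>. \<Sum>j<m. (-1) ^ j * of_nat (m choose (j + 1)) * ((sigma n m ^^ j) X) f \<alpha>)"

text \<open>(U(t) f)(z) = f(e^{it} z), i.e. coefficients multiplied by e^{it|alpha|}.\<close>
definition U :: "nat \<Rightarrow> real \<Rightarrow> hel \<Rightarrow> hel" where
  "U n t f = (\<lambda>\<alpha>. exp (\<i> * of_real t * of_nat (mlen n \<alpha>)) * f \<alpha>)"

definition U_adj :: "nat \<Rightarrow> nat \<Rightarrow> real \<Rightarrow> hel \<Rightarrow> hel" where
  "U_adj n m t = adj (Hm n m) (ipH n m) (Hm n m) (ipH n m) (U n t)"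

text \<open>T_k as a weak operator integral.\<close>
definition Tk :: "nat \<Rightarrow> nat \<Rightarrow> (hel \<Rightarrow> hel) \<Rightarrow> int \<Rightarrow> hel \<Rightarrow> hel" where
  "Tk n m T k f = (SOME h. h \<in> Hm n m \<and> (\<forall>g\<in>Hm n m.
      ipH n m h g = complex_of_real (1 / (2 * pi)) *
        integral {0..2 * pi} (\<lambda>t. exp (- (\<i> * of_int k * of_real t)) *
                                   ipH n m (U n t (T (U_adj n m t f))) g)))"

end

theory Submission
  imports Defs
begin

lemma rho_pos: "0 < rho n m \<alpha>"
  unfolding rho_def by (intro divide_pos_pos mult_pos_pos prod_pos) auto

definition nsq :: "nat \<Rightarrow> nat \<Rightarrow> hel \<Rightarrow> real" where
  "nsq n m f = (\<Sum>\<^sub>\<infinity>\<alpha>\<in>MI n. (cmod (f \<alpha>))\<^sup>2 / rho n m \<alpha>)"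

lemma HmD1: "f \<in> Hm n m \<Longrightarrow> \<alpha> \<notin> MI n \<Longrightarrow> f \<alpha> = 0"
  by (simp add: Hm_def)
lemma HmD2: "f \<in> Hm n m \<Longrightarrow> (\<lambda>\<alpha>. (cmod (f \<alpha>))\<^sup>2 / rho n m \<alpha>) summable_on MI n"
  by (simp add: Hm_def)

lemma Hm_zero: "(\<lambda>_. 0) \<in> Hm n m"
  by (simp add: Hm_def)

lemma Hm_diag:
  assumes f: "f \<in> Hm n m" and B: "\<And>\<alpha>. cmod (d \<alpha>) \<le> B"
  shows "(\<lambda>\<alpha>. d \<alpha> * f \<alpha>) \<in> Hm n m"
proof -
  have "(\<lambda>\<alpha>. B\<^sup>2 * ((cmod (f \<alpha>))\<^sup>2 / rho n m \<alpha>)) summable_on MI n"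
    using HmD2[OF f] by (rule summable_on_cmult_right)
  moreover have "(cmod (d \<alpha> * f \<alpha>))\<^sup>2 / rho n m \<alpha> \<le> B\<^sup>2 * ((cmod (f \<alpha>))\<^sup>2 / rho n m \<alpha>)" for \<alpha>
  proof -
    have "(cmod (d \<alpha>))\<^sup>2 \<le> B\<^sup>2" using B[of \<alpha>] by (intro power_mono) auto
    hence "(cmod (d \<alpha>))\<^sup>2 * (cmod (f \<alpha>))\<^sup>2 \<le> B\<^sup>2 * (cmod (f \<alpha>))\<^sup>2"
      by (intro mult_right_mono) auto
    thus ?thesis using rho_pos[of n m \<alpha>]
      by (simp add: norm_mult power_mult_distrib divide_right_mono)
  qed
  ultimately have "(\<lambda>\<alpha>. (cmod (d \<alpha> * f \<alpha>))\<^sup>2 / rho n m \<alpha>) summable_on MI n"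
    by (rule summable_on_comparison_test) (auto intro!: divide_nonneg_pos rho_pos)
  thus ?thesis using f by (auto simp: Hm_def)
qed

lemma Hm_scale: "f \<in> Hm n m \<Longrightarrow> (\<lambda>\<alpha>. c * f \<alpha>) \<in> Hm n m"
  using Hm_diag[of f n m "\<lambda>_. c" "cmod c"] by simp

lemma Hm_add:
  assumes f: "f \<in> Hm n m" and g: "g \<in> Hm n m"
  shows "(\<lambda>\<alpha>. f \<alpha> + g \<alpha>) \<in> Hm n m"
proof -
  have "(\<lambda>\<alpha>. 2 * ((cmod (f \<alpha>))\<^sup>2 / rho n m \<alpha>) + 2 * ((cmod (g \<alpha>))\<^sup>2 / rho n m \<alpha>)) summable_on MI n"
    using HmD2[OF f] HmD2[OF g] by (intro summable_on_add summable_on_cmult_right)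
  moreover have "(cmod (f \<alpha> + g \<alpha>))\<^sup>2 / rho n m \<alpha> \<le>
     2 * ((cmod (f \<alpha>))\<^sup>2 / rho n m \<alpha>) + 2 * ((cmod (g \<alpha>))\<^sup>2 / rho n m \<alpha>)" for \<alpha>
  proof -
    have "(cmod (f \<alpha> + g \<alpha>))\<^sup>2 \<le> (cmod (f \<alpha>) + cmod (g \<alpha>))\<^sup>2"
      by (intro power_mono norm_triangle_ineq) auto
    also have "\<dots> \<le> 2 * (cmod (f \<alpha>))\<^sup>2 + 2 * (cmod (g \<alpha>))\<^sup>2"
      using zero_le_power2[of "cmod (f \<alpha>) - cmod (g \<alpha>)"] by (simp add: power2_eq_square algebra_simps)
    finally show ?thesis using rho_pos[of n m \<alpha>]
      by (simp add: add_divide_distrib[symmetric] divide_right_mono)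
  qed
  ultimately have "(\<lambda>\<alpha>. (cmod (f \<alpha> + g \<alpha>))\<^sup>2 / rho n m \<alpha>) summable_on MI n"
    by (rule summable_on_comparison_test) (auto intro!: divide_nonneg_pos rho_pos)
  thus ?thesis using f g by (auto simp: Hm_def)
qed

lemma Hm_diff: "f \<in> Hm n m \<Longrightarrow> g \<in> Hm n m \<Longrightarrow> (\<lambda>\<alpha>. f \<alpha> - g \<alpha>) \<in> Hm n m"
  using Hm_add[of f n m "\<lambda>\<alpha>. (-1) * g \<alpha>"] Hm_scale[of g n m "-1"] by simp

lemma Hm_sum: "finite I \<Longrightarrow> (\<And>i. i \<in> I \<Longrightarrow> F i \<in> Hm n m) \<Longrightarrow> (\<lambda>\<alpha>. \<Sum>i\<in>I. F i \<alpha>) \<in> Hm n m"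
  by (induction I rule: finite_induct) (auto simp: Hm_zero intro!: Hm_add)

lemma ip_summable:
  assumes f: "f \<in> Hm n m" and g: "g \<in> Hm n m"
  shows "(\<lambda>\<alpha>. f \<alpha> * cnj (g \<alpha>) / complex_of_real (rho n m \<alpha>)) summable_on MI n"
proof (rule abs_summable_summable)
  have "(\<lambda>\<alpha>. (cmod (f \<alpha>))\<^sup>2 / rho n m \<alpha> + (cmod (g \<alpha>))\<^sup>2 / rho n m \<alpha>) summable_on MI n"
    using HmD2[OF f] HmD2[OF g] by (intro summable_on_add)
  moreover have "norm (f \<alpha> * cnj (g \<alpha>) / complex_of_real (rho n m \<alpha>)) \<le>
      (cmod (f \<alpha>))\<^sup>2 / rho n m \<alpha> + (cmod (g \<alpha>))\<^sup>2 / rho n m \<alpha>" for \<alpha>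
  proof -
    have "cmod (f \<alpha>) * cmod (g \<alpha>) \<le> (cmod (f \<alpha>))\<^sup>2 + (cmod (g \<alpha>))\<^sup>2"
    proof -
      have "2 * (cmod (f \<alpha>) * cmod (g \<alpha>)) \<le> (cmod (f \<alpha>))\<^sup>2 + (cmod (g \<alpha>))\<^sup>2"
        using sum_squares_bound[of "cmod (f \<alpha>)" "cmod (g \<alpha>)"] by (simp add: mult.assoc)
      moreover have "0 \<le> cmod (f \<alpha>) * cmod (g \<alpha>)" by simp
      ultimately show ?thesis by linarith
    qed
    hence "cmod (f \<alpha>) * cmod (g \<alpha>) / rho n m \<alpha> \<le> ((cmod (f \<alpha>))\<^sup>2 + (cmod (g \<alpha>))\<^sup>2) / rho n m \<alpha>"
      using rho_pos[of n m \<alpha>] by (rule divide_right_mono[OF _ less_imp_le])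
    moreover have "norm (f \<alpha> * cnj (g \<alpha>) / complex_of_real (rho n m \<alpha>)) = cmod (f \<alpha>) * cmod (g \<alpha>) / rho n m \<alpha>"
      using rho_pos[of n m \<alpha>] by (simp add: norm_mult norm_divide)
    ultimately show ?thesis by (simp add: add_divide_distrib)
  qed
  ultimately show "(\<lambda>\<alpha>. norm (f \<alpha> * cnj (g \<alpha>) / complex_of_real (rho n m \<alpha>))) summable_on MI n"
    by (rule summable_on_comparison_test) auto
qed

lemma ipH_add1:
  assumes "f \<in> Hm n m" "g \<in> Hm n m" "h \<in> Hm n m"
  shows "ipH n m (\<lambda>\<alpha>. f \<alpha> + g \<alpha>) h = ipH n m f h + ipH n m g h"
proof -
  have e: "(\<lambda>\<alpha>. (f \<alpha> + g \<alpha>) * cnj (h \<alpha>) / complex_of_real (rho n m \<alpha>)) =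
    (\<lambda>\<alpha>. f \<alpha> * cnj (h \<alpha>) / complex_of_real (rho n m \<alpha>) + g \<alpha> * cnj (h \<alpha>) / complex_of_real (rho n m \<alpha>))"
    by (simp add: distrib_right add_divide_distrib)
  show ?thesis unfolding ipH_def e
    by (rule infsum_add) (auto intro!: ip_summable assms)
qed

lemma ipH_scale1:
  shows "ipH n m (\<lambda>\<alpha>. c * f \<alpha>) h = c * ipH n m f h"
proof -
  have e: "(\<lambda>\<alpha>. c * f \<alpha> * cnj (h \<alpha>) / complex_of_real (rho n m \<alpha>)) =
    (\<lambda>\<alpha>. c * (f \<alpha> * cnj (h \<alpha>) / complex_of_real (rho n m \<alpha>)))"
    by (simp add: mult.assoc)
  show ?thesis unfolding ipH_def e by (rule infsum_cmult_right')
qed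

lemma ipH_cnj: "ipH n m g f = cnj (ipH n m f g)"
proof -
  have e: "(\<lambda>\<alpha>. g \<alpha> * cnj (f \<alpha>) / complex_of_real (rho n m \<alpha>)) =
    (\<lambda>\<alpha>. cnj (f \<alpha> * cnj (g \<alpha>) / complex_of_real (rho n m \<alpha>)))"
    by (simp add: mult.commute)
  show ?thesis unfolding ipH_def e infsum_cnj ..
qed

lemma ipH_diag: "ipH n m (\<lambda>\<alpha>. d \<alpha> * f \<alpha>) g = ipH n m f (\<lambda>\<alpha>. cnj (d \<alpha>) * g \<alpha>)"
proof -
  have e: "(\<lambda>\<alpha>. d \<alpha> * f \<alpha> * cnj (g \<alpha>) / complex_of_real (rho n m \<alpha>)) =
    (\<lambda>\<alpha>. f \<alpha> * cnj (cnj (d \<alpha>) * g \<alpha>) / complex_of_real (rho n m \<alpha>))"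
    by (simp add: mult.commute mult.left_commute)
  show ?thesis unfolding ipH_def e ..
qed

lemma ipH_self: assumes "f \<in> Hm n m" shows "ipH n m f f = complex_of_real (nsq n m f)"
proof -
  have "ipH n m f f = (\<Sum>\<^sub>\<infinity>\<alpha>\<in>MI n. complex_of_real ((cmod (f \<alpha>))\<^sup>2 / rho n m \<alpha>))"
    unfolding ipH_def by (intro infsum_cong) (simp only: complex_norm_square[symmetric] of_real_divide)
  also have "\<dots> = complex_of_real (nsq n m f)" unfolding nsq_def
    by (rule infsumI, rule has_sum_of_real, rule has_sum_infsum, rule HmD2[OF assms])
  finally show ?thesis .
qed


lemma nsq_nonneg: "0 \<le> nsq n m f"
  unfolding nsq_def by (intro infsum_nonneg divide_nonneg_pos rho_pos) auto

lemma nsq_zeroD: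
  assumes f: "f \<in> Hm n m" and z: "nsq n m f = 0"
  shows "f = (\<lambda>_. 0)"
proof
  fix \<alpha> show "f \<alpha> = 0"
  proof (cases "\<alpha> \<in> MI n")
    case True
    have "(cmod (f \<alpha>))\<^sup>2 / rho n m \<alpha> = 0"
    proof (rule nonneg_infsum_le_0D[where A="MI n" and f="\<lambda>\<beta>. (cmod (f \<beta>))\<^sup>2 / rho n m \<beta>"])
      show "(\<Sum>\<^sub>\<infinity>\<alpha>\<in>MI n. (cmod (f \<alpha>))\<^sup>2 / rho n m \<alpha>) \<le> 0" using z by (simp add: nsq_def)
      show "(\<lambda>\<alpha>. (cmod (f \<alpha>))\<^sup>2 / rho n m \<alpha>) summable_on MI n" by (rule HmD2[OF f])
      show "0 \<le> (cmod (f x))\<^sup>2 / rho n m x" if "x \<in> MI n" for x using rho_pos[of n m x] by simp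
      show "\<alpha> \<in> MI n" by (rule True)
    qed
    thus ?thesis using rho_pos[of n m \<alpha>] by simp
  qed (use HmD1[OF f] in auto)
qed

lemma ipH_zero1: "ipH n m (\<lambda>_. 0) g = 0"
  unfolding ipH_def by simp

lemma ipH_zero2: "ipH n m g (\<lambda>_. 0) = 0"
  unfolding ipH_def by simp

lemma ipH_add2:
  assumes "f \<in> Hm n m" "g \<in> Hm n m" "h \<in> Hm n m"
  shows "ipH n m h (\<lambda>\<alpha>. f \<alpha> + g \<alpha>) = ipH n m h f + ipH n m h g"
  using ipH_add1[OF assms] ipH_cnj[of n m h] by simp

lemma ipH_scale2: "ipH n m h (\<lambda>\<alpha>. c * f \<alpha>) = cnj c * ipH n m h f"
  using ipH_scale1[of n m c f h] ipH_cnj[of n m h] by simp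

lemma ipH_diff1:
  assumes "f \<in> Hm n m" "g \<in> Hm n m" "h \<in> Hm n m"
  shows "ipH n m (\<lambda>\<alpha>. f \<alpha> - g \<alpha>) h = ipH n m f h - ipH n m g h"
proof -
  have "ipH n m (\<lambda>\<alpha>. f \<alpha> + (-1) * g \<alpha>) h = ipH n m f h + ipH n m (\<lambda>\<alpha>. (-1) * g \<alpha>) h"
    by (rule ipH_add1) (use assms Hm_scale[OF assms(2), of "-1"] in simp_all)
  thus ?thesis using ipH_scale1[of n m "-1" g h] by simp
qed

lemma ipH_diff2:
  assumes "f \<in> Hm n m" "g \<in> Hm n m" "h \<in> Hm n m"
  shows "ipH n m h (\<lambda>\<alpha>. f \<alpha> - g \<alpha>) = ipH n m h f - ipH n m h g"
  using ipH_diff1[OF assms] ipH_cnj[of n m h] by simp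

lemma ipH_sum1:
  assumes "finite I" "\<And>i. i \<in> I \<Longrightarrow> F i \<in> Hm n m" "h \<in> Hm n m"
  shows "ipH n m (\<lambda>\<alpha>. \<Sum>i\<in>I. F i \<alpha>) h = (\<Sum>i\<in>I. ipH n m (F i) h)"
  using assms
proof (induction I rule: finite_induct)
  case empty then show ?case by (simp add: ipH_zero1)
next
  case (insert x I)
  have "ipH n m (\<lambda>\<alpha>. F x \<alpha> + (\<Sum>i\<in>I. F i \<alpha>)) h = ipH n m (F x) h + ipH n m (\<lambda>\<alpha>. \<Sum>i\<in>I. F i \<alpha>) h"
    by (rule ipH_add1) (use insert in \<open>auto intro!: Hm_sum\<close>)
  thus ?case using insert by simp
qed

lemma ipH_sum2:
  assumes "finite I" "\<And>i. i \<in> I \<Longrightarrow> F i \<in> Hm n m" "h \<in> Hm n m"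
  shows "ipH n m h (\<lambda>\<alpha>. \<Sum>i\<in>I. F i \<alpha>) = (\<Sum>i\<in>I. ipH n m h (F i))"
  using ipH_sum1[OF assms] ipH_cnj[of n m h] by (simp add: cnj_sum)

lemma ipH_self_zeroD:
  assumes "f \<in> Hm n m" "ipH n m f f = 0" shows "f = (\<lambda>_. 0)"
proof -
  have "nsq n m f = 0" using assms(2) ipH_self[OF assms(1)] by simp
  thus ?thesis by (rule nsq_zeroD[OF assms(1)])
qed

lemma Hm_ext2:
  assumes u: "u \<in> Hm n m" and v: "v \<in> Hm n m" and h: "\<And>x. x \<in> Hm n m \<Longrightarrow> ipH n m x u = ipH n m x v"
  shows "u = v"
proof -
  let ?d = "\<lambda>\<alpha>. u \<alpha> - v \<alpha>"
  have d: "?d \<in> Hm n m" by (rule Hm_diff[OF u v])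
  have "ipH n m ?d ?d = ipH n m ?d u - ipH n m ?d v" by (rule ipH_diff2[OF u v d])
  also have "\<dots> = 0" using h[OF d] by simp
  finally have "?d = (\<lambda>_. 0)" by (rule ipH_self_zeroD[OF d])
  hence "\<And>\<alpha>. u \<alpha> - v \<alpha> = 0" by (simp add: fun_eq_iff)
  thus ?thesis by (simp add: fun_eq_iff)
qed

lemma Hm_ext1:
  assumes u: "u \<in> Hm n m" and v: "v \<in> Hm n m" and h: "\<And>x. x \<in> Hm n m \<Longrightarrow> ipH n m u x = ipH n m v x"
  shows "u = v"
proof (rule Hm_ext2[OF u v])
  fix x assume x: "x \<in> Hm n m"
  have "ipH n m x u = cnj (ipH n m u x)" by (rule ipH_cnj)
  also have "\<dots> = cnj (ipH n m v x)" using h[OF x] by simp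
  also have "\<dots> = ipH n m x v" by (rule ipH_cnj[symmetric])
  finally show "ipH n m x u = ipH n m x v" .
qed

lemma two_xy_le:
  fixes x y u :: real assumes u: "0 < u"
  shows "2 * x * y \<le> u * x\<^sup>2 + y\<^sup>2 / u"
proof -
  have e: "(u*x-y)^2 = u*(u * x\<^sup>2 + y\<^sup>2 / u - 2 * x * y)" using u by (simp add: field_simps power2_eq_square)
  have "0 \<le> u*(u * x\<^sup>2 + y\<^sup>2 / u - 2 * x * y)" unfolding e[symmetric] by simp
  hence "0 \<le> u * x\<^sup>2 + y\<^sup>2 / u - 2 * x * y" using u by (simp add: zero_le_mult_iff)
  thus ?thesis by simp
qed

lemma ip_abs_summable:
  assumes f: "f \<in> Hm n m" and g: "g \<in> Hm n m"
  shows "(\<lambda>\<alpha>. norm (f \<alpha> * cnj (g \<alpha>) / complex_of_real (rho n m \<alpha>))) summable_on MI n"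
  using summable_on_iff_abs_summable_on_complex[THEN iffD1, OF ip_summable[OF f g]] .

lemma ip_bound_u:
  assumes f: "f \<in> Hm n m" and g: "g \<in> Hm n m" and u: "0 < u"
  shows "cmod (ipH n m f g) \<le> (u * nsq n m f + nsq n m g / u) / 2"
proof -
  let ?w1 = "\<lambda>\<alpha>. (cmod (f \<alpha>))\<^sup>2 / rho n m \<alpha>"
  let ?w2 = "\<lambda>\<alpha>. (cmod (g \<alpha>))\<^sup>2 / rho n m \<alpha>"
  have s: "(\<lambda>\<alpha>. (u/2) * ?w1 \<alpha> + (1/(2*u)) * ?w2 \<alpha>) summable_on MI n"
    using HmD2[OF f] HmD2[OF g] by (intro summable_on_add summable_on_cmult_right)
  have "cmod (ipH n m f g) \<le> (\<Sum>\<^sub>\<infinity>\<alpha>\<in>MI n. norm (f \<alpha> * cnj (g \<alpha>) / complex_of_real (rho n m \<alpha>)))"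
    unfolding ipH_def by (rule norm_infsum_bound) (rule ip_abs_summable[OF f g])
  also have "\<dots> \<le> (\<Sum>\<^sub>\<infinity>\<alpha>\<in>MI n. (u/2) * ?w1 \<alpha> + (1/(2*u)) * ?w2 \<alpha>)"
  proof (rule infsum_mono[OF ip_abs_summable[OF f g] s])
    fix \<alpha>
    have r: "0 < rho n m \<alpha>" by (rule rho_pos)
    have "2 * cmod (f \<alpha>) * cmod (g \<alpha>) \<le> u * (cmod (f \<alpha>))\<^sup>2 + (cmod (g \<alpha>))\<^sup>2 / u"
      by (rule two_xy_le[OF u])
    hence "(2 * cmod (f \<alpha>) * cmod (g \<alpha>)) / rho n m \<alpha> \<le> (u * (cmod (f \<alpha>))\<^sup>2 + (cmod (g \<alpha>))\<^sup>2 / u) / rho n m \<alpha>"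
      using r by (intro divide_right_mono) auto
    thus "norm (f \<alpha> * cnj (g \<alpha>) / complex_of_real (rho n m \<alpha>)) \<le> (u/2) * ?w1 \<alpha> + (1/(2*u)) * ?w2 \<alpha>"
      using r by (simp add: norm_mult norm_divide field_simps)
  qed
  also have "\<dots> = (u/2) * nsq n m f + (1/(2*u)) * nsq n m g"
    unfolding nsq_def
    by (subst infsum_add) (auto intro!: summable_on_cmult_right HmD2[OF f] HmD2[OF g] simp only: infsum_cmult_right')
  also have "\<dots> = (u * nsq n m f + nsq n m g / u) / 2" by (simp add: field_simps)
  finally show ?thesis .
qed

lemma cauchy_schwarz:
  assumes f: "f \<in> Hm n m" and g: "g \<in> Hm n m"
  shows "cmod (ipH n m f g) \<le> sqrt (nsq n m f) * sqrt (nsq n m g)"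
proof (cases "nsq n m f = 0 \<or> nsq n m g = 0")
  case True
  then show ?thesis using nsq_zeroD[OF f] nsq_zeroD[OF g] by (auto simp: ipH_zero1 ipH_zero2)
next
  case False
  define a where "a = sqrt (nsq n m f)"
  define b where "b = sqrt (nsq n m g)"
  have a: "0 < a" and b: "0 < b" using False nsq_nonneg[of n m f] nsq_nonneg[of n m g]
    by (auto simp: a_def b_def)
  have fa: "nsq n m f = a\<^sup>2" and gb: "nsq n m g = b\<^sup>2" using nsq_nonneg[of n m f] nsq_nonneg[of n m g]
    by (auto simp: a_def b_def)
  have "cmod (ipH n m f g) \<le> ((b/a) * nsq n m f + nsq n m g / (b/a)) / 2"
    by (rule ip_bound_u[OF f g]) (use a b in simp)
  also have "\<dots> = a * b" using a b by (simp add: fa gb field_simps power2_eq_square)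
  finally show ?thesis by (simp add: a_def b_def)
qed


lemma adj_unique:
  assumes B1: "\<forall>y\<in>S2. B y \<in> S1" and B2: "\<forall>x\<in>S1. \<forall>y\<in>S2. ip2 (A x) y = ip1 x (B y)"
    and ext: "\<And>u v. u \<in> S1 \<Longrightarrow> v \<in> S1 \<Longrightarrow> (\<And>x. x \<in> S1 \<Longrightarrow> ip1 x u = ip1 x v) \<Longrightarrow> u = v"
    and y: "y \<in> S2"
  shows "adj S1 ip1 S2 ip2 A y = B y"
proof -
  let ?P = "\<lambda>B. (\<forall>y\<in>S2. B y \<in> S1) \<and> (\<forall>x\<in>S1. \<forall>y\<in>S2. ip2 (A x) y = ip1 x (B y))"
  have "?P B" using B1 B2 by blast
  hence P: "?P (adj S1 ip1 S2 ip2 A)" unfolding adj_def by (rule someI[of ?P B])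
  show ?thesis
  proof (rule ext)
    show "adj S1 ip1 S2 ip2 A y \<in> S1" using P y by blast
    show "B y \<in> S1" using B1 y by blast
    fix x assume "x \<in> S1"
    thus "ip1 x (adj S1 ip1 S2 ip2 A y) = ip1 x (B y)" using P B2 y by metis
  qed
qed

lemma adj_prop:
  assumes B1: "\<forall>y\<in>S2. B y \<in> S1" and B2: "\<forall>x\<in>S1. \<forall>y\<in>S2. ip2 (A x) y = ip1 x (B y)"
  shows "(\<forall>y\<in>S2. adj S1 ip1 S2 ip2 A y \<in> S1) \<and> (\<forall>x\<in>S1. \<forall>y\<in>S2. ip2 (A x) y = ip1 x (adj S1 ip1 S2 ip2 A y))"
proof -
  let ?P = "\<lambda>B. (\<forall>y\<in>S2. B y \<in> S1) \<and> (\<forall>x\<in>S1. \<forall>y\<in>S2. ip2 (A x) y = ip1 x (B y))"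
  have "?P B" using B1 B2 by blast
  thus ?thesis unfolding adj_def by (rule someI[of ?P B])
qed

lemma Hmn_iff: "F \<in> Hmn n m \<longleftrightarrow> (\<forall>i\<ge>n. F i = (\<lambda>_. 0)) \<and> (\<forall>i<n. F i \<in> Hm n m)"
  by (simp add: Hmn_def)

lemma Hmn_diff: "F \<in> Hmn n m \<Longrightarrow> G \<in> Hmn n m \<Longrightarrow> (\<lambda>i \<alpha>. F i \<alpha> - G i \<alpha>) \<in> Hmn n m"
  by (auto simp: Hmn_def intro!: Hm_diff)

lemma Hmn_ext2:
  assumes Y: "Y \<in> Hmn n m" and Z: "Z \<in> Hmn n m"
    and h: "\<And>X. X \<in> Hmn n m \<Longrightarrow> ipHn n m X Y = ipHn n m X Z"
  shows "Y = Z"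
proof -
  let ?D = "\<lambda>i \<alpha>. Y i \<alpha> - Z i \<alpha>"
  have D: "?D \<in> Hmn n m" by (rule Hmn_diff[OF Y Z])
  have "ipHn n m ?D ?D = (\<Sum>i<n. ipH n m (?D i) (Y i) - ipH n m (?D i) (Z i))"
    unfolding ipHn_def
    by (intro sum.cong refl ipH_diff2) (use Y Z D in \<open>auto simp: Hmn_def\<close>)
  also have "\<dots> = ipHn n m ?D Y - ipHn n m ?D Z" by (simp add: ipHn_def sum_subtractf)
  also have "\<dots> = 0" using h[OF D] by simp
  finally have z: "(\<Sum>i<n. complex_of_real (nsq n m (?D i))) = 0"
    unfolding ipHn_def using D by (simp add: ipH_self Hmn_def)
  have "\<forall>i\<in>{..<n}. nsq n m (?D i) = 0"
  proof -
    have "(\<Sum>i<n. nsq n m (?D i)) = 0" using z by (simp only: of_real_sum[symmetric] of_real_eq_0_iff)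
    thus ?thesis by (subst (asm) sum_nonneg_eq_0_iff) (auto simp: nsq_nonneg)
  qed
  hence "\<And>i. i < n \<Longrightarrow> ?D i = (\<lambda>_. 0)" using D by (auto simp: Hmn_def intro!: nsq_zeroD)
  moreover have "\<And>i. n \<le> i \<Longrightarrow> ?D i = (\<lambda>_. 0)" using Y Z by (auto simp: Hmn_def)
  ultimately have "?D i = (\<lambda>_. 0)" for i by (cases "i < n") simp_all
  hence "\<And>i \<alpha>. Y i \<alpha> - Z i \<alpha> = 0" by (simp add: fun_eq_iff)
  thus ?thesis by (simp add: fun_eq_iff)
qed

definition inc :: "nat \<Rightarrow> mi \<Rightarrow> mi" where "inc i \<alpha> = \<alpha>(i := Suc (\<alpha> i))"

lemma MI_upd: "i < n \<Longrightarrow> \<alpha>(i := x) \<in> MI n \<longleftrightarrow> \<alpha> \<in> MI n"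
  by (auto simp: MI_def)

lemma mlen_upd: "i < n \<Longrightarrow> mlen n (\<alpha>(i := x)) + \<alpha> i = mlen n \<alpha> + x"
proof -
  assume i: "i < n"
  have "mlen n (\<alpha>(i := x)) = x + (\<Sum>j\<in>{..<n} - {i}. \<alpha> j)"
    unfolding mlen_def using i by (subst sum.remove[of _ i]) auto
  moreover have "mlen n \<alpha> = \<alpha> i + (\<Sum>j\<in>{..<n} - {i}. \<alpha> j)"
    unfolding mlen_def using i by (subst sum.remove[of _ i]) auto
  ultimately show ?thesis by simp
qed

lemma prod_upd: "i < (n::nat) \<Longrightarrow> (\<Prod>j<n. fact (((\<alpha>::mi)(i := x)) j) :: real) * fact (\<alpha> i) = (\<Prod>j<n. fact (\<alpha> j)) * fact x"
proof -
  assume i: "i < n"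
  have "(\<Prod>j<n. fact ((\<alpha>(i := x)) j) :: real) = fact x * (\<Prod>j\<in>{..<n} - {i}. fact (\<alpha> j))"
    using i by (subst prod.remove[of "{..<n}" i]) (auto intro!: prod.cong)
  moreover have "(\<Prod>j<n. fact (\<alpha> j) :: real) = fact (\<alpha> i) * (\<Prod>j\<in>{..<n} - {i}. fact (\<alpha> j))"
    using i by (subst prod.remove[of "{..<n}" i]) auto
  ultimately show ?thesis by simp
qed

lemma mlen_inc: "i < n \<Longrightarrow> mlen n (inc i \<alpha>) = Suc (mlen n \<alpha>)"
  using mlen_upd[of i n \<alpha> "Suc (\<alpha> i)"] by (simp add: inc_def)

lemma mlen_ge: "i < n \<Longrightarrow> \<alpha> i \<le> mlen n \<alpha>"
  unfolding mlen_def by (rule member_le_sum) auto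

lemma rho_inc:
  assumes m: "1 \<le> m" and i: "i < n"
  shows "rho n m (inc i \<alpha>) * real (Suc (\<alpha> i)) = rho n m \<alpha> * real (m + mlen n \<alpha>)"
proof -
  define L where "L = mlen n \<alpha>"
  define P where "P = (\<Prod>j<n. fact (\<alpha> j) :: real)"
  define P' where "P' = (\<Prod>j<n. fact (inc i \<alpha> j) :: real)"
  have P'P: "P' = P * real (Suc (\<alpha> i))"
  proof -
    have "P' * fact (\<alpha> i) = P * fact (Suc (\<alpha> i))"
      using prod_upd[OF i, of \<alpha> "Suc (\<alpha> i)"] by (simp add: P'_def P_def inc_def)
    hence "P' * fact (\<alpha> i) = (P * real (Suc (\<alpha> i))) * fact (\<alpha> i)" by (simp add: algebra_simps)
    thus ?thesis by simp
  qed
  have P0: "P > 0" unfolding P_def by (intro prod_pos) auto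
  define D where "D = P * fact (m - 1)"
  have D: "D > 0" using P0 by (simp add: D_def)
  have f: "fact (m + L) = real (m + L) * fact (m + L - 1)"
    using m by (subst fact_reduce) auto
  have "rho n m (inc i \<alpha>) = fact (m + L) / (P' * fact (m - 1))"
    unfolding rho_def using mlen_inc[OF i, of \<alpha>] by (simp add: L_def P'_def)
  also have "\<dots> = real (m + L) * fact (m + L - 1) / (D * real (Suc (\<alpha> i)))"
    unfolding f P'P D_def by (simp add: ac_simps)
  finally have r1: "rho n m (inc i \<alpha>) = real (m + L) * fact (m + L - 1) / (D * real (Suc (\<alpha> i)))" .
  have r2: "rho n m \<alpha> = fact (m + L - 1) / D"
    unfolding rho_def by (simp add: L_def P_def D_def)
  have s: "real (Suc (\<alpha> i)) \<noteq> 0" by (simp del: of_nat_Suc)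
  show ?thesis unfolding r1 r2 L_def[symmetric] using D s by (simp add: field_simps del: of_nat_Suc)
qed

lemma rho_inc_ge:
  assumes m: "1 \<le> m" and i: "i < n"
  shows "rho n m \<alpha> \<le> rho n m (inc i \<alpha>)"
proof -
  have "rho n m \<alpha> * real (Suc (\<alpha> i)) \<le> rho n m \<alpha> * real (m + mlen n \<alpha>)"
    using m mlen_ge[OF i, of \<alpha>] rho_pos[of n m \<alpha>] by (intro mult_left_mono) auto
  also have "\<dots> = rho n m (inc i \<alpha>) * real (Suc (\<alpha> i))" by (rule rho_inc[OF m i, symmetric])
  finally show ?thesis by simp
qed

lemma inc_inj: "inj_on (inc i) A"
proof (rule inj_onI)
  fix a b assume h: "inc i a = inc i b"
  show "a = b"
  proof
    fix j from fun_cong[OF h, of j] show "a j = b j" by (auto simp: inc_def split: if_splits)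
  qed
qed

lemma inc_image: "i < n \<Longrightarrow> inc i ` MI n = {\<alpha> \<in> MI n. 0 < \<alpha> i}"
proof (safe)
  fix \<alpha> assume "i < n" "\<alpha> \<in> MI n" "0 < \<alpha> i"
  hence "\<alpha> = inc i (\<alpha>(i := \<alpha> i - 1))" "\<alpha>(i := \<alpha> i - 1) \<in> MI n"
    by (auto simp: inc_def MI_upd)
  thus "\<alpha> \<in> inc i ` MI n" by blast
qed (auto simp: inc_def MI_upd)

lemma has_sum_inc:
  assumes i: "i < n" and z: "\<And>\<alpha>. \<alpha> \<in> MI n \<Longrightarrow> \<alpha> i = 0 \<Longrightarrow> \<phi> \<alpha> = 0"
  shows "(\<phi> has_sum s) (MI n) \<longleftrightarrow> ((\<lambda>\<beta>. \<phi> (inc i \<beta>)) has_sum s) (MI n)"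
proof -
  have "(\<phi> has_sum s) (MI n) \<longleftrightarrow> (\<phi> has_sum s) (inc i ` MI n)"
    by (rule has_sum_cong_neutral) (use z i in \<open>auto simp: inc_image\<close>)
  also have "\<dots> \<longleftrightarrow> ((\<phi> \<circ> inc i) has_sum s) (MI n)" by (rule has_sum_reindex[OF inc_inj])
  finally show ?thesis by (simp add: o_def)
qed

lemma summable_inc:
  assumes i: "i < n" and z: "\<And>\<alpha>. \<alpha> \<in> MI n \<Longrightarrow> \<alpha> i = 0 \<Longrightarrow> \<phi> \<alpha> = 0"
  shows "\<phi> summable_on (MI n) \<longleftrightarrow> (\<lambda>\<beta>. \<phi> (inc i \<beta>)) summable_on (MI n)"
  using has_sum_inc[OF assms] by (simp add: summable_on_def)

lemma infsum_inc:
  assumes i: "i < n" and z: "\<And>\<alpha>. \<alpha> \<in> MI n \<Longrightarrow> \<alpha> i = 0 \<Longrightarrow> \<phi> \<alpha> = 0"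
  shows "infsum \<phi> (MI n) = infsum (\<lambda>\<beta>. \<phi> (inc i \<beta>)) (MI n)"
proof (cases "\<phi> summable_on (MI n)")
  case True
  hence "(\<phi> has_sum infsum \<phi> (MI n)) (MI n)" by (rule has_sum_infsum)
  hence "((\<lambda>\<beta>. \<phi> (inc i \<beta>)) has_sum infsum \<phi> (MI n)) (MI n)" using has_sum_inc[OF assms] by simp
  thus ?thesis by (rule infsumI[symmetric])
next
  case False
  hence "\<not> (\<lambda>\<beta>. \<phi> (inc i \<beta>)) summable_on (MI n)" using summable_inc[OF assms] by simp
  thus ?thesis using False by (simp add: infsum_not_exists)
qed

lemma Mzi_inc: "Mzi i f (inc i \<beta>) = f \<beta>"
  by (simp add: Mzi_def inc_def)

lemma Mzi_zero: "\<alpha> i = 0 \<Longrightarrow> Mzi i f \<alpha> = 0"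
  by (simp add: Mzi_def)


definition Mia :: "nat \<Rightarrow> nat \<Rightarrow> nat \<Rightarrow> hel \<Rightarrow> hel" where
  "Mia n m i g = (\<lambda>\<alpha>. if \<alpha> \<in> MI n then complex_of_real (real (Suc (\<alpha> i)) / real (m + mlen n \<alpha>)) * g (inc i \<alpha>) else 0)"

lemma rho_c:
  assumes m: "1 \<le> m" and i: "i < n"
  shows "real (Suc (\<alpha> i)) / real (m + mlen n \<alpha>) / rho n m \<alpha> = 1 / rho n m (inc i \<alpha>)"
proof -
  define S where "S = real (Suc (\<alpha> i))"
  define L where "L = real (m + mlen n \<alpha>)"
  define r where "r = rho n m \<alpha>"
  define r' where "r' = rho n m (inc i \<alpha>)"
  have e: "r' * S = r * L" unfolding S_def L_def r_def r'_def by (rule rho_inc[OF m i])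
  have S: "S > 0" by (simp add: S_def)
  have "S / L / r = S / (L * r)" by simp
  also have "L * r = r' * S" using e by (simp add: mult.commute)
  also have "S / (r' * S) = 1 / r'" using S by simp
  finally show ?thesis unfolding S_def L_def r_def r'_def .
qed

lemma c_le1:
  assumes m: "1 \<le> m" and i: "i < n"
  shows "real (Suc (\<alpha> i)) / real (m + mlen n \<alpha>) \<le> 1"
  using mlen_ge[OF i, of \<alpha>] m by (simp add: divide_le_eq_1 del: of_nat_Suc)

context
  fixes n m :: nat
  assumes m: "1 \<le> m"
begin

lemma Mzi_Hm:
  assumes i: "i < n" and f: "f \<in> Hm n m"
  shows "Mzi i f \<in> Hm n m"
proof -
  have out: "Mzi i f \<alpha> = 0" if "\<alpha> \<notin> MI n" for \<alpha>
    using that HmD1[OF f, of "\<alpha>(i := \<alpha> i - 1)"] MI_upd[OF i] by (simp add: Mzi_def)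
  have "(\<lambda>\<beta>. (cmod (Mzi i f (inc i \<beta>)))\<^sup>2 / rho n m (inc i \<beta>)) summable_on MI n"
  proof (rule summable_on_comparison_test[OF HmD2[OF f]])
    fix \<beta>
    have "(cmod (f \<beta>))\<^sup>2 / rho n m (inc i \<beta>) \<le> (cmod (f \<beta>))\<^sup>2 / rho n m \<beta>"
      by (rule divide_left_mono) (auto intro: rho_inc_ge[OF m i] mult_pos_pos rho_pos)
    thus "(cmod (Mzi i f (inc i \<beta>)))\<^sup>2 / rho n m (inc i \<beta>) \<le> (cmod (f \<beta>))\<^sup>2 / rho n m \<beta>"
      by (simp add: Mzi_inc)
    show "0 \<le> (cmod (Mzi i f (inc i \<beta>)))\<^sup>2 / rho n m (inc i \<beta>)"
      using rho_pos[of n m "inc i \<beta>"] by simp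
  qed
  hence "(\<lambda>\<alpha>. (cmod (Mzi i f \<alpha>))\<^sup>2 / rho n m \<alpha>) summable_on MI n"
    by (subst summable_inc[OF i]) (auto simp: Mzi_zero)
  thus ?thesis using out by (simp add: Hm_def)
qed

lemma Mia_Hm:
  assumes i: "i < n" and g: "g \<in> Hm n m"
  shows "Mia n m i g \<in> Hm n m"
proof -
  let ?\<psi> = "\<lambda>\<alpha>. if \<alpha> i = 0 then 0 else (cmod (g \<alpha>))\<^sup>2 / rho n m \<alpha>"
  have "?\<psi> summable_on MI n"
    by (rule summable_on_comparison_test[OF HmD2[OF g]]) (auto intro!: divide_nonneg_pos rho_pos)
  hence s: "(\<lambda>\<beta>. ?\<psi> (inc i \<beta>)) summable_on MI n"
    by (subst summable_inc[OF i, symmetric]) auto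
  have "(\<lambda>\<alpha>. (cmod (Mia n m i g \<alpha>))\<^sup>2 / rho n m \<alpha>) summable_on MI n"
  proof (rule summable_on_comparison_test[OF s])
    fix \<alpha> assume a: "\<alpha> \<in> MI n"
    define c where "c = real (Suc (\<alpha> i)) / real (m + mlen n \<alpha>)"
    have c0: "0 \<le> c" and c1: "c \<le> 1" using c_le1[OF m i, of \<alpha>] by (auto simp: c_def)
    have "(cmod (Mia n m i g \<alpha>))\<^sup>2 / rho n m \<alpha> = c * (c / rho n m \<alpha>) * (cmod (g (inc i \<alpha>)))\<^sup>2"
    proof -
      have Ma: "Mia n m i g \<alpha> = complex_of_real c * g (inc i \<alpha>)" using a by (simp add: Mia_def c_def)
      have "cmod (Mia n m i g \<alpha>) = c * cmod (g (inc i \<alpha>))" unfolding Ma using c0 by (simp add: norm_mult)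
      thus ?thesis by (simp add: power2_eq_square divide_inverse ac_simps)
    qed
    also have "\<dots> = c * ((cmod (g (inc i \<alpha>)))\<^sup>2 / rho n m (inc i \<alpha>))"
      unfolding c_def rho_c[OF m i] by simp
    also have "\<dots> \<le> 1 * ((cmod (g (inc i \<alpha>)))\<^sup>2 / rho n m (inc i \<alpha>))"
      using c1 rho_pos[of n m "inc i \<alpha>"] by (intro mult_right_mono) auto
    finally show "(cmod (Mia n m i g \<alpha>))\<^sup>2 / rho n m \<alpha> \<le> ?\<psi> (inc i \<alpha>)" by (simp add: inc_def)
    show "0 \<le> (cmod (Mia n m i g \<alpha>))\<^sup>2 / rho n m \<alpha>" using rho_pos[of n m \<alpha>] by simp
  qed
  thus ?thesis by (simp add: Hm_def Mia_def)
qed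

lemma Mzi_adj_ident:
  assumes i: "i < n"
  shows "ipH n m (Mzi i f) g = ipH n m f (Mia n m i g)"
proof -
  have "ipH n m (Mzi i f) g = (\<Sum>\<^sub>\<infinity>\<beta>\<in>MI n. Mzi i f (inc i \<beta>) * cnj (g (inc i \<beta>)) / complex_of_real (rho n m (inc i \<beta>)))"
    unfolding ipH_def by (rule infsum_inc[OF i]) (simp add: Mzi_zero)
  also have "\<dots> = ipH n m f (Mia n m i g)"
    unfolding ipH_def
  proof (rule infsum_cong)
    fix \<beta> assume b: "\<beta> \<in> MI n"
    define c where "c = complex_of_real (real (Suc (\<beta> i)) / real (m + mlen n \<beta>))"
    have Mb: "Mia n m i g \<beta> = c * g (inc i \<beta>)" using b by (simp add: Mia_def c_def)
    have cc: "cnj c = c" by (simp add: c_def)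
    have e0: "c / complex_of_real (rho n m \<beta>) = complex_of_real (real (Suc (\<beta> i)) / real (m + mlen n \<beta>) / rho n m \<beta>)"
      by (simp only: c_def of_real_divide)
    have e: "c / complex_of_real (rho n m \<beta>) = 1 / complex_of_real (rho n m (inc i \<beta>))"
      unfolding e0 rho_c[OF m i] by simp
    have "f \<beta> * cnj (Mia n m i g \<beta>) / complex_of_real (rho n m \<beta>) = f \<beta> * cnj (g (inc i \<beta>)) * (c / complex_of_real (rho n m \<beta>))"
      unfolding Mb complex_cnj_mult cc by (simp add: divide_inverse ac_simps)
    also have "\<dots> = Mzi i f (inc i \<beta>) * cnj (g (inc i \<beta>)) / complex_of_real (rho n m (inc i \<beta>))"
      unfolding e by (simp add: Mzi_inc)
    finally show "Mzi i f (inc i \<beta>) * cnj (g (inc i \<beta>)) / complex_of_real (rho n m (inc i \<beta>)) =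
       f \<beta> * cnj (Mia n m i g \<beta>) / complex_of_real (rho n m \<beta>)" by simp
  qed
  finally show ?thesis .
qed

lemma Mzi_adj_eq:
  assumes i: "i < n" and g: "g \<in> Hm n m"
  shows "Mzi_adj n m i g = Mia n m i g"
  unfolding Mzi_adj_def
proof (rule adj_unique[where B="Mia n m i"])
  show "\<forall>y\<in>Hm n m. Mia n m i y \<in> Hm n m" using Mia_Hm[OF i] by blast
  show "\<forall>x\<in>Hm n m. \<forall>y\<in>Hm n m. ipH n m (Mzi i x) y = ipH n m x (Mia n m i y)"
    using Mzi_adj_ident[OF i] by blast
qed (auto intro: Hm_ext2 g)

end

definition dl :: "nat \<Rightarrow> nat \<Rightarrow> mi \<Rightarrow> complex" where
  "dl n m \<alpha> = (if mlen n \<alpha> = 0 then 1 else of_nat (m + mlen n \<alpha> - 1) / of_nat (mlen n \<alpha>))"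

lemma delta_eq: "delta n m f = (\<lambda>\<alpha>. dl n m \<alpha> * f \<alpha>)"
  by (simp add: delta_def dl_def fun_eq_iff)

lemma cnj_dl: "cnj (dl n m \<alpha>) = dl n m \<alpha>"
  by (simp add: dl_def)

lemma nat_ineq: "1 \<le> (m::nat) \<Longrightarrow> 1 \<le> L \<Longrightarrow> m + L - 1 \<le> m * L"
proof -
  assume "1 \<le> m" "1 \<le> L"
  then obtain a b where "m = Suc a" "L = Suc b" by (cases m; cases L) auto
  thus ?thesis by simp
qed

lemma dl_bound: "1 \<le> m \<Longrightarrow> cmod (dl n m \<alpha>) \<le> real m"
proof (cases "mlen n \<alpha> = 0")
  case False
  assume m: "1 \<le> m"
  define L where "L = mlen n \<alpha>"
  have L: "1 \<le> L" using False by (simp add: L_def)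
  have "dl n m \<alpha> = of_nat (m + L - 1) / of_nat L" using False by (simp add: dl_def L_def)
  hence "cmod (dl n m \<alpha>) = real (m + L - 1) / real L" by (simp only: norm_divide norm_of_nat)
  also have "\<dots> \<le> real m"
  proof -
    have "real (m + L - 1) \<le> real m * real L" using nat_ineq[OF m L] by (simp only: of_nat_mult[symmetric] of_nat_le_iff)
    thus ?thesis using L by (simp add: pos_divide_le_eq)
  qed
  finally show ?thesis .
qed (simp add: dl_def)

definition eu :: "nat \<Rightarrow> real \<Rightarrow> mi \<Rightarrow> complex" where
  "eu n t \<alpha> = exp (\<i> * of_real t * of_nat (mlen n \<alpha>))"

lemma U_eq: "U n t f = (\<lambda>\<alpha>. eu n t \<alpha> * f \<alpha>)"
  by (simp add: U_def eu_def)

lemma eu_norm: "cmod (eu n t \<alpha>) = 1"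
proof -
  have "eu n t \<alpha> = exp (\<i> * of_real (t * real (mlen n \<alpha>)))" by (simp add: eu_def mult.assoc)
  thus ?thesis by simp
qed

lemma eu_cnj: "cnj (eu n t \<alpha>) = eu n (-t) \<alpha>"
  by (simp add: eu_def exp_cnj)

lemma eu_inv: "eu n t \<alpha> * eu n (-t) \<alpha> = 1"
  by (simp add: eu_def exp_minus[symmetric] exp_add[symmetric])

lemma U_Hm: "f \<in> Hm n m \<Longrightarrow> U n t f \<in> Hm n m"
  unfolding U_eq by (rule Hm_diag[where B=1]) (simp_all add: eu_norm)

lemma U_adj_ident: "ipH n m (U n t f) g = ipH n m f (U n (-t) g)"
  unfolding U_eq ipH_diag eu_cnj ..

lemma U_adj_eq: "g \<in> Hm n m \<Longrightarrow> U_adj n m t g = U n (-t) g"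
  unfolding U_adj_def
  by (rule adj_unique[where B="U n (-t)"]) (auto intro: U_Hm U_adj_ident Hm_ext2)

lemma U_inv: "U n t (U n (-t) f) = f"
  by (simp add: U_eq mult.assoc[symmetric] eu_inv)

lemma nsq_U: "nsq n m (U n t f) = nsq n m f"
  by (simp add: nsq_def U_eq norm_mult eu_norm)

lemma U_add: "U n t (\<lambda>\<alpha>. a \<alpha> + b \<alpha>) = (\<lambda>\<alpha>. U n t a \<alpha> + U n t b \<alpha>)"
  by (simp add: U_eq distrib_left)
lemma U_diff: "U n t (\<lambda>\<alpha>. a \<alpha> - b \<alpha>) = (\<lambda>\<alpha>. U n t a \<alpha> - U n t b \<alpha>)"
  by (simp add: U_eq right_diff_distrib)
lemma U_scale: "U n t (\<lambda>\<alpha>. c * a \<alpha>) = (\<lambda>\<alpha>. c * U n t a \<alpha>)"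
  by (simp add: U_eq ac_simps)

definition vec :: "nat \<Rightarrow> nat \<Rightarrow> hel \<Rightarrow> hvec" where
  "vec n m g = (\<lambda>i. if i < n then Mia n m i g else (\<lambda>_. 0))"

definition Pe :: "nat \<Rightarrow> nat \<Rightarrow> hvec \<Rightarrow> hvec" where
  "Pe n m F = vec n m (delta n m (Mz n F))"

lemma ipHn_cnj: "ipHn n m G F = cnj (ipHn n m F G)"
  unfolding ipHn_def cnj_sum by (rule sum.cong) (auto intro: ipH_cnj)

context
  fixes n m :: nat
  assumes m: "1 \<le> m"
begin

lemma delta_Hm: "f \<in> Hm n m \<Longrightarrow> delta n m f \<in> Hm n m"
  unfolding delta_eq by (rule Hm_diag[where B="real m"]) (simp_all add: dl_bound[OF m])

lemma delta_sa: "ipH n m (delta n m f) g = ipH n m f (delta n m g)"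
  unfolding delta_eq ipH_diag cnj_dl ..

lemma Mz_Hm: "F \<in> Hmn n m \<Longrightarrow> Mz n F \<in> Hm n m"
  unfolding Mz_def by (rule Hm_sum) (auto simp: Hmn_def intro: Mzi_Hm[OF m])

lemma Mz'_Hm: "F \<in> Hmn n m \<Longrightarrow> Mz' n m F \<in> Hm n m"
  unfolding Mz'_def by (intro delta_Hm Mz_Hm)

lemma vec_Hmn: "g \<in> Hm n m \<Longrightarrow> vec n m g \<in> Hmn n m"
  by (auto simp: Hmn_def vec_def intro: Mia_Hm[OF m])

lemma ipHn_vec:
  assumes X: "X \<in> Hmn n m" and g: "g \<in> Hm n m"
  shows "ipHn n m X (vec n m g) = ipH n m (Mz n X) g"
proof -
  have "ipH n m (Mz n X) g = (\<Sum>i<n. ipH n m (Mzi i (X i)) g)"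
    unfolding Mz_def by (rule ipH_sum1) (use X g in \<open>auto simp: Hmn_def intro: Mzi_Hm[OF m]\<close>)
  also have "\<dots> = ipHn n m X (vec n m g)"
    unfolding ipHn_def vec_def by (rule sum.cong) (auto intro: Mzi_adj_ident[OF m])
  finally show ?thesis by simp
qed

lemma Mz'_adj_eq:
  assumes g: "g \<in> Hm n m"
  shows "Mz'_adj n m g = vec n m (delta n m g)"
  unfolding Mz'_adj_def
proof (rule adj_unique[where B="\<lambda>g. vec n m (delta n m g)"])
  show "\<forall>y\<in>Hm n m. vec n m (delta n m y) \<in> Hmn n m" by (auto intro: vec_Hmn delta_Hm)
  show "\<forall>x\<in>Hmn n m. \<forall>y\<in>Hm n m. ipH n m (Mz' n m x) y = ipHn n m x (vec n m (delta n m y))"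
    by (auto simp: Mz'_def delta_sa ipHn_vec delta_Hm)
qed (auto intro: Hmn_ext2 g)

lemma Mz_adj_eq: "f \<in> Hm n m \<Longrightarrow> Mz_adj n m f = vec n m f"
  by (auto simp: Mz_adj_def vec_def fun_eq_iff Mzi_adj_eq[OF m])

lemma Pe_Hmn: "F \<in> Hmn n m \<Longrightarrow> Pe n m F \<in> Hmn n m"
  unfolding Pe_def by (intro vec_Hmn delta_Hm Mz_Hm)

lemma Mzi_Mia:
  assumes i: "i < n"
  shows "Mzi i (Mia n m i x) \<alpha> = (if \<alpha> \<in> MI n then complex_of_real (real (\<alpha> i) / real (m + mlen n \<alpha> - 1)) * x \<alpha> else 0)"
proof (cases "\<alpha> i = 0")
  case True thus ?thesis by (simp add: Mzi_zero)
next
  case False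
  define d where "d = \<alpha>(i := \<alpha> i - 1)"
  have md: "mlen n d + \<alpha> i = mlen n \<alpha> + (\<alpha> i - 1)" unfolding d_def by (rule mlen_upd[OF i])
  have ge: "\<alpha> i \<le> mlen n \<alpha>" by (rule mlen_ge[OF i])
  have md': "m + mlen n d = m + mlen n \<alpha> - 1" using md False ge by linarith
  have id: "inc i d = \<alpha>" using False by (simp add: d_def inc_def)
  have dM: "d \<in> MI n \<longleftrightarrow> \<alpha> \<in> MI n" unfolding d_def by (rule MI_upd[OF i])
  have "Mzi i (Mia n m i x) \<alpha> = Mia n m i x d" using False by (simp add: Mzi_def d_def)
  also have "\<dots> = (if \<alpha> \<in> MI n then complex_of_real (real (\<alpha> i) / real (m + mlen n \<alpha> - 1)) * x \<alpha> else 0)"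
    using False unfolding Mia_def dM id md' by (simp add: d_def)
  finally show ?thesis .
qed

lemma Mz_Pe:
  assumes F: "F \<in> Hmn n m"
  shows "Mz n (Pe n m F) = Mz n F"
proof
  fix \<alpha>
  define h where "h = Mz n F"
  have h: "h \<in> Hm n m" unfolding h_def by (rule Mz_Hm[OF F])
  have "Mz n (Pe n m F) \<alpha> = (\<Sum>i<n. if \<alpha> \<in> MI n then complex_of_real (real (\<alpha> i) / real (m + mlen n \<alpha> - 1)) * delta n m h \<alpha> else 0)"
    unfolding Pe_def h_def[symmetric] Mz_def[of n "vec n m (delta n m h)"] unfolding vec_def by (rule sum.cong) (auto simp: Mzi_Mia)
  also have "\<dots> = (if \<alpha> \<in> MI n then complex_of_real (real (mlen n \<alpha>) / real (m + mlen n \<alpha> - 1)) * delta n m h \<alpha> else 0)"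
  proof (cases "\<alpha> \<in> MI n")
    case True
    have "(\<Sum>i<n. complex_of_real (real (\<alpha> i) / real (m + mlen n \<alpha> - 1)) * delta n m h \<alpha>)
       = complex_of_real (\<Sum>i<n. real (\<alpha> i) / real (m + mlen n \<alpha> - 1)) * delta n m h \<alpha>"
      by (simp only: sum_distrib_right[symmetric] of_real_sum)
    also have "(\<Sum>i<n. real (\<alpha> i) / real (m + mlen n \<alpha> - 1)) = real (mlen n \<alpha>) / real (m + mlen n \<alpha> - 1)"
      by (simp add: sum_divide_distrib[symmetric] mlen_def)
    finally show ?thesis using True by simp
  qed simp
  also have "\<dots> = h \<alpha>"
  proof (cases "\<alpha> \<in> MI n")
    case False thus ?thesis using HmD1[OF h] by simp
  next
    case True
    show ?thesis
    proof (cases "mlen n \<alpha> = 0")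
      case z: True
      have a0: "\<forall>i<n. \<alpha> i = 0" using z mlen_ge[of _ n \<alpha>] by (metis le_zero_eq)
      have "h \<alpha> = 0" unfolding h_def Mz_def using a0 by (simp add: Mzi_zero)
      thus ?thesis using z True by simp
    next
      case nz: False
      define L where "L = mlen n \<alpha>"
      define K where "K = m + mlen n \<alpha> - 1"
      have L0: "L \<noteq> 0" and K0: "K \<noteq> 0" using nz m by (auto simp: L_def K_def)
      have d: "delta n m h \<alpha> = of_nat K / of_nat L * h \<alpha>"
        using nz by (simp add: delta_eq dl_def K_def L_def)
      have e1: "complex_of_real (real L / real K) = of_nat L / of_nat K" by simp
      have "complex_of_real (real L / real K) * delta n m h \<alpha> = h \<alpha>"
        unfolding d e1 using L0 K0 by simp
      thus ?thesis using True by (simp add: L_def K_def)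
    qed
  qed
  finally show "Mz n (Pe n m F) \<alpha> = Mz n F \<alpha>" by (simp add: h_def)
qed

end

lemma Mzi_diff: "Mzi i (\<lambda>\<alpha>. a \<alpha> - b \<alpha>) = (\<lambda>\<alpha>. Mzi i a \<alpha> - Mzi i b \<alpha>)"
  by (auto simp: Mzi_def fun_eq_iff)

lemma Mz_diff: "Mz n (\<lambda>i \<alpha>. X i \<alpha> - Y i \<alpha>) = (\<lambda>\<alpha>. Mz n X \<alpha> - Mz n Y \<alpha>)"
  by (simp add: Mz_def Mzi_diff sum_subtractf)

lemma Mzi_scale: "Mzi i (\<lambda>\<alpha>. c * a \<alpha>) = (\<lambda>\<alpha>. c * Mzi i a \<alpha>)"
  by (auto simp: Mzi_def fun_eq_iff)

lemma Mia_diff: "Mia n m i (\<lambda>\<alpha>. a \<alpha> - b \<alpha>) = (\<lambda>\<alpha>. Mia n m i a \<alpha> - Mia n m i b \<alpha>)"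
  by (auto simp: Mia_def fun_eq_iff right_diff_distrib)

lemma Mia_scale: "Mia n m i (\<lambda>\<alpha>. c * a \<alpha>) = (\<lambda>\<alpha>. c * Mia n m i a \<alpha>)"
  by (auto simp: Mia_def fun_eq_iff ac_simps)

lemma vec_diff: "vec n m (\<lambda>\<alpha>. a \<alpha> - b \<alpha>) = (\<lambda>i \<alpha>. vec n m a i \<alpha> - vec n m b i \<alpha>)"
  by (auto simp: vec_def fun_eq_iff Mia_diff)

lemma ipHn_diff1:
  assumes "X \<in> Hmn n m" "Y \<in> Hmn n m" "Z \<in> Hmn n m"
  shows "ipHn n m (\<lambda>i \<alpha>. X i \<alpha> - Y i \<alpha>) Z = ipHn n m X Z - ipHn n m Y Z"
  unfolding ipHn_def sum_subtractf[symmetric]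
  by (rule sum.cong) (use assms in \<open>auto simp: Hmn_def intro!: ipH_diff1\<close>)

lemma Hmn_self_zero:
  assumes D: "D \<in> Hmn n m" and z: "ipHn n m D D = 0"
  shows "D = (\<lambda>i _. 0)"
proof -
  have z': "(\<Sum>i<n. complex_of_real (nsq n m (D i))) = 0"
    using z unfolding ipHn_def using D by (simp add: ipH_self Hmn_def)
  have "\<forall>i\<in>{..<n}. nsq n m (D i) = 0"
  proof -
    have "(\<Sum>i<n. nsq n m (D i)) = 0" using z' by (simp only: of_real_sum[symmetric] of_real_eq_0_iff)
    thus ?thesis by (subst (asm) sum_nonneg_eq_0_iff) (auto simp: nsq_nonneg)
  qed
  hence "\<And>i. i < n \<Longrightarrow> D i = (\<lambda>_. 0)" using D by (auto simp: Hmn_def intro!: nsq_zeroD)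
  moreover have "\<And>i. n \<le> i \<Longrightarrow> D i = (\<lambda>_. 0)" using D by (auto simp: Hmn_def)
  ultimately have "D i = (\<lambda>_. 0)" for i by (cases "i < n") simp_all
  thus ?thesis by (simp add: fun_eq_iff)
qed

context
  fixes n m :: nat
  assumes m: "1 \<le> m"
begin

lemma projIm_eq:
  assumes F: "F \<in> Hmn n m"
  shows "projIm n m F = Pe n m F"
proof -
  let ?Q = "\<lambda>G. G \<in> ImMz_adj n m \<and> (\<forall>K\<in>ImMz_adj n m. ipHn n m (\<lambda>i \<alpha>. F i \<alpha> - G i \<alpha>) K = 0)"
  have h: "delta n m (Mz n F) \<in> Hm n m" by (intro delta_Hm[OF m] Mz_Hm[OF m] F)
  have PeF: "Pe n m F \<in> Hmn n m" by (rule Pe_Hmn[OF m F])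
  have orth: "ipHn n m (\<lambda>i \<alpha>. F i \<alpha> - Pe n m F i \<alpha>) K = 0" if "K \<in> ImMz_adj n m" for K
  proof -
    obtain g where g: "g \<in> Hm n m" and K: "K = vec n m g"
      using \<open>K \<in> ImMz_adj n m\<close> by (auto simp: ImMz_adj_def Mz_adj_eq[OF m])
    have "ipHn n m (\<lambda>i \<alpha>. F i \<alpha> - Pe n m F i \<alpha>) K = ipH n m (Mz n (\<lambda>i \<alpha>. F i \<alpha> - Pe n m F i \<alpha>)) g"
      unfolding K by (rule ipHn_vec[OF m Hmn_diff[OF F PeF] g])
    also have "\<dots> = 0" unfolding Mz_diff Mz_Pe[OF m F] by (simp add: ipH_zero1)
    finally show ?thesis .
  qed
  have QPe: "?Q (Pe n m F)"
  proof
    show "Pe n m F \<in> ImMz_adj n m"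
      unfolding ImMz_adj_def Pe_def using h Mz_adj_eq[OF m h] by (metis image_eqI)
  qed (use orth in blast)
  hence Qp: "?Q (projIm n m F)" unfolding projIm_def by (rule someI[of ?Q])
  then obtain g1 where g1: "g1 \<in> Hm n m" and G1: "projIm n m F = vec n m g1"
    by (auto simp: ImMz_adj_def Mz_adj_eq[OF m])
  define D where "D = (\<lambda>i \<alpha>. projIm n m F i \<alpha> - Pe n m F i \<alpha>)"
  have DD: "D = vec n m (\<lambda>\<alpha>. g1 \<alpha> - delta n m (Mz n F) \<alpha>)"
    unfolding D_def G1 Pe_def vec_diff ..
  have Dim: "D \<in> ImMz_adj n m"
    unfolding DD ImMz_adj_def using Hm_diff[OF g1 h] Mz_adj_eq[OF m Hm_diff[OF g1 h]] by (metis image_eqI)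
  have G1H: "projIm n m F \<in> Hmn n m" unfolding G1 by (rule vec_Hmn[OF m g1])
  have DH: "D \<in> Hmn n m" unfolding D_def by (rule Hmn_diff[OF G1H PeF])
  have FG: "(\<lambda>i \<alpha>. F i \<alpha> - projIm n m F i \<alpha>) \<in> Hmn n m" by (rule Hmn_diff[OF F G1H])
  have FP: "(\<lambda>i \<alpha>. F i \<alpha> - Pe n m F i \<alpha>) \<in> Hmn n m" by (rule Hmn_diff[OF F PeF])
  have e: "D = (\<lambda>i \<alpha>. (F i \<alpha> - Pe n m F i \<alpha>) - (F i \<alpha> - projIm n m F i \<alpha>))"
    unfolding D_def by simp
  have "ipHn n m D D = ipHn n m (\<lambda>i \<alpha>. F i \<alpha> - Pe n m F i \<alpha>) D - ipHn n m (\<lambda>i \<alpha>. F i \<alpha> - projIm n m F i \<alpha>) D"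
    by (subst (1) e, rule ipHn_diff1[OF FP FG DH])
  also have "\<dots> = 0" using orth[OF Dim] Qp Dim by simp
  finally have "D = (\<lambda>i _. 0)" by (rule Hmn_self_zero[OF DH])
  thus ?thesis unfolding D_def by (simp add: fun_eq_iff)
qed

lemma Pe_sa:
  assumes H: "H \<in> Hmn n m" and G: "G \<in> Hmn n m"
  shows "ipHn n m (Pe n m H) G = ipHn n m H (Pe n m G)"
proof -
  have hH: "Mz n H \<in> Hm n m" and hG: "Mz n G \<in> Hm n m" using H G by (auto intro: Mz_Hm[OF m])
  have "ipHn n m (Pe n m H) G = cnj (ipHn n m G (Pe n m H))" by (rule ipHn_cnj)
  also have "\<dots> = cnj (ipH n m (Mz n G) (delta n m (Mz n H)))"
    unfolding Pe_def by (subst ipHn_vec[OF m G delta_Hm[OF m hH]]) rule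
  also have "\<dots> = ipH n m (delta n m (Mz n H)) (Mz n G)" by (simp add: ipH_cnj[of n m "delta n m (Mz n H)"])
  also have "\<dots> = ipH n m (Mz n H) (delta n m (Mz n G))" by (rule delta_sa[OF m])
  also have "\<dots> = ipHn n m H (Pe n m G)"
    unfolding Pe_def by (rule ipHn_vec[OF m H delta_Hm[OF m hG], symmetric])
  finally show ?thesis .
qed

lemma ipHn_Mz'adj:
  assumes y: "y \<in> Hm n m" and G: "G \<in> Hmn n m"
  shows "ipHn n m (Mz'_adj n m y) G = ipH n m y (Mz' n m G)"
proof -
  have hG: "Mz n G \<in> Hm n m" using G by (rule Mz_Hm[OF m])
  have "ipHn n m (Mz'_adj n m y) G = cnj (ipHn n m G (vec n m (delta n m y)))"
    unfolding Mz'_adj_eq[OF m y] by (rule ipHn_cnj)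
  also have "\<dots> = cnj (ipH n m (Mz n G) (delta n m y))" by (subst ipHn_vec[OF m G delta_Hm[OF m y]]) rule
  also have "\<dots> = cnj (ipH n m (Mz' n m G) y)" by (simp add: Mz'_def delta_sa[OF m])
  also have "\<dots> = ipH n m y (Mz' n m G)" by (simp add: ipH_cnj[of n m y])
  finally show ?thesis .
qed

end

lemma eu_dec:
  assumes i: "i < n" and a: "0 < \<alpha> i"
  shows "eu n s (\<alpha>(i := \<alpha> i - 1)) = exp (- (\<i> * of_real s)) * eu n s \<alpha>"
proof -
  have md: "mlen n (\<alpha>(i := \<alpha> i - 1)) + \<alpha> i = mlen n \<alpha> + (\<alpha> i - 1)" by (rule mlen_upd[OF i])
  have ge: "\<alpha> i \<le> mlen n \<alpha>" by (rule mlen_ge[OF i])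
  have L: "mlen n (\<alpha>(i := \<alpha> i - 1)) + 1 = mlen n \<alpha>" using md a ge by linarith
  have "eu n s \<alpha> = exp (\<i> * of_real s * of_nat (mlen n (\<alpha>(i := \<alpha> i - 1))) + \<i> * of_real s)"
    unfolding eu_def L[symmetric] by (simp add: distrib_left add.commute)
  thus ?thesis by (simp add: eu_def exp_add exp_minus field_simps)
qed

lemma eu_inc:
  assumes i: "i < n"
  shows "eu n s (inc i \<alpha>) = exp (\<i> * of_real s) * eu n s \<alpha>"
  unfolding eu_def mlen_inc[OF i] by (simp add: distrib_left exp_add mult.commute)

lemma Mzi_U:
  assumes i: "i < n"
  shows "Mzi i (U n s f) = (\<lambda>\<alpha>. exp (- (\<i> * of_real s)) * U n s (Mzi i f) \<alpha>)"
  using eu_dec[OF i] by (auto simp: Mzi_def U_eq fun_eq_iff)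

lemma Mia_U:
  assumes i: "i < n"
  shows "Mia n m i (U n s f) = (\<lambda>\<alpha>. exp (\<i> * of_real s) * U n s (Mia n m i f) \<alpha>)"
  by (auto simp: Mia_def U_eq fun_eq_iff eu_inc[OF i])

lemma delta_U: "delta n m (U n s f) = U n s (delta n m f)"
  by (simp add: delta_eq U_eq ac_simps)

lemma U_zero: "U n s (\<lambda>_. 0) = (\<lambda>_. 0)"
  by (simp add: U_eq)


definition maps :: "nat \<Rightarrow> nat \<Rightarrow> (hel \<Rightarrow> hel) \<Rightarrow> bool" where
  "maps n m X \<longleftrightarrow> (\<forall>f\<in>Hm n m. X f \<in> Hm n m)"

definition hom :: "nat \<Rightarrow> nat \<Rightarrow> (hel \<Rightarrow> hel) \<Rightarrow> bool" where
  "hom n m X \<longleftrightarrow> (\<forall>c. \<forall>f\<in>Hm n m. X (\<lambda>\<alpha>. c * f \<alpha>) = (\<lambda>\<alpha>. c * X f \<alpha>))"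

definition Wt :: "nat \<Rightarrow> nat \<Rightarrow> (hel \<Rightarrow> hel) \<Rightarrow> real \<Rightarrow> hel \<Rightarrow> hel" where
  "Wt n m T t = (\<lambda>x. U n t (T (U_adj n m t x)))"

definition coef :: "nat \<Rightarrow> nat \<Rightarrow> complex" where
  "coef m j = (-1) ^ j * of_nat (m choose (j + 1))"

definition RS :: "nat \<Rightarrow> nat \<Rightarrow> (hel \<Rightarrow> hel) \<Rightarrow> hvec \<Rightarrow> hvec \<Rightarrow> complex" where
  "RS n m X F G = (\<Sum>i<n. \<Sum>j<m. coef m j * ipH n m ((sigma n m ^^ j) X (F i)) (G i))"

lemma exp_inv_mult: "exp (\<i> * complex_of_real t) * exp (- (\<i> * complex_of_real t)) = 1"
  by (simp add: exp_minus)

lemma ipH_unimod: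
  assumes "cmod e = 1"
  shows "ipH n m (\<lambda>\<alpha>. e * p \<alpha>) (\<lambda>\<alpha>. e * q \<alpha>) = ipH n m p q"
proof -
  have "e * cnj e = 1" using complex_norm_square[of e] assms by simp
  thus ?thesis by (simp add: ipH_scale1 ipH_scale2 mult.assoc[symmetric])
qed

context
  fixes n m :: nat
  assumes m: "1 \<le> m"
begin

lemma sigma_Hm: "maps n m X \<Longrightarrow> maps n m (sigma n m X)"
  unfolding maps_def sigma_def
  by (auto intro!: Hm_sum Mzi_Hm[OF m] simp: Mzi_adj_eq[OF m] Mia_Hm[OF m])

lemma sigma_ip:
  assumes X: "maps n m X" and a: "a \<in> Hm n m" and b: "b \<in> Hm n m"
  shows "ipH n m (sigma n m X a) b = (\<Sum>i<n. ipH n m (X (Mia n m i a)) (Mia n m i b))"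
proof -
  have "ipH n m (sigma n m X a) b = (\<Sum>i<n. ipH n m (Mzi i (X (Mzi_adj n m i a))) b)"
    unfolding sigma_def
    by (rule ipH_sum1) (use X a b in \<open>auto intro!: Mzi_Hm[OF m] simp: maps_def Mzi_adj_eq[OF m] Mia_Hm[OF m]\<close>)
  also have "\<dots> = (\<Sum>i<n. ipH n m (X (Mia n m i a)) (Mia n m i b))"
    by (rule sum.cong) (auto simp: Mzi_adj_ident[OF m] Mzi_adj_eq[OF m] a)
  finally show ?thesis .
qed

lemma sigma_hom:
  assumes X: "maps n m X" and H: "hom n m X"
  shows "hom n m (sigma n m X)"
  unfolding hom_def
proof (intro allI ballI)
  fix c f assume f: "f \<in> Hm n m"
  have cf: "(\<lambda>\<alpha>. c * f \<alpha>) \<in> Hm n m" by (rule Hm_scale[OF f])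
  have "sigma n m X (\<lambda>\<alpha>. c * f \<alpha>) = (\<lambda>\<alpha>. \<Sum>i<n. Mzi i (X (\<lambda>\<alpha>. c * Mia n m i f \<alpha>)) \<alpha>)"
    unfolding sigma_def using cf by (simp add: Mzi_adj_eq[OF m] Mia_scale)
  also have "\<dots> = (\<lambda>\<alpha>. \<Sum>i<n. c * Mzi i (X (Mia n m i f)) \<alpha>)"
    using H f by (auto simp: hom_def Mia_Hm[OF m] Mzi_scale intro!: sum.cong)
  also have "\<dots> = (\<lambda>\<alpha>. c * sigma n m X f \<alpha>)"
    unfolding sigma_def using f by (simp add: Mzi_adj_eq[OF m] sum_distrib_left)
  finally show "sigma n m X (\<lambda>\<alpha>. c * f \<alpha>) = (\<lambda>\<alpha>. c * sigma n m X f \<alpha>)" .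
qed

lemma sigma_pow: "maps n m X \<Longrightarrow> maps n m ((sigma n m ^^ j) X)"
  by (induction j) (auto intro: sigma_Hm)

lemma sigma_pow_hom: "maps n m X \<Longrightarrow> hom n m X \<Longrightarrow> hom n m ((sigma n m ^^ j) X)"
  by (induction j) (auto intro: sigma_hom sigma_pow)

lemma Wt_maps: "maps n m T \<Longrightarrow> maps n m (Wt n m T t)"
  by (auto simp: maps_def Wt_def U_adj_eq U_Hm)

lemma sig_conj:
  assumes T: "maps n m T" and H: "hom n m T" and a: "a \<in> Hm n m" and b: "b \<in> Hm n m"
  shows "ipH n m ((sigma n m ^^ j) T (U n (-t) a)) (U n (-t) b) = ipH n m ((sigma n m ^^ j) (Wt n m T t) a) b"
  using a b
proof (induction j arbitrary: a b)
  case 0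
  then show ?case by (simp add: Wt_def U_adj_eq U_adj_ident)
next
  case (Suc j)
  let ?e = "exp (- (\<i> * complex_of_real t))"
  have e: "cmod ?e = 1"
  proof -
    have "?e = exp (\<i> * complex_of_real (-t))" by simp
    thus ?thesis by (simp only: norm_exp_i_times)
  qed
  have Sj: "maps n m ((sigma n m ^^ j) T)" by (rule sigma_pow[OF T])
  have Hj: "hom n m ((sigma n m ^^ j) T)" by (rule sigma_pow_hom[OF T H])
  have "ipH n m ((sigma n m ^^ Suc j) T (U n (-t) a)) (U n (-t) b)
      = (\<Sum>i<n. ipH n m ((sigma n m ^^ j) T (Mia n m i (U n (-t) a))) (Mia n m i (U n (-t) b)))"
    using sigma_ip[OF Sj U_Hm[OF Suc.prems(1)] U_Hm[OF Suc.prems(2)]] by simp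
  also have "\<dots> = (\<Sum>i<n. ipH n m ((sigma n m ^^ j) T (U n (-t) (Mia n m i a))) (U n (-t) (Mia n m i b)))"
  proof (rule sum.cong[OF refl])
    fix i assume "i \<in> {..<n}" hence i: "i < n" by simp
    have ma: "U n (-t) (Mia n m i a) \<in> Hm n m" by (intro U_Hm Mia_Hm[OF m i] Suc.prems)
    have "ipH n m ((sigma n m ^^ j) T (Mia n m i (U n (-t) a))) (Mia n m i (U n (-t) b))
        = ipH n m ((sigma n m ^^ j) T (\<lambda>\<alpha>. ?e * U n (-t) (Mia n m i a) \<alpha>)) (\<lambda>\<alpha>. ?e * U n (-t) (Mia n m i b) \<alpha>)"
      by (simp add: Mia_U[OF i])
    also have "\<dots> = ipH n m (\<lambda>\<alpha>. ?e * (sigma n m ^^ j) T (U n (-t) (Mia n m i a)) \<alpha>) (\<lambda>\<alpha>. ?e * U n (-t) (Mia n m i b) \<alpha>)"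
      using Hj ma by (simp add: hom_def)
    also have "\<dots> = ipH n m ((sigma n m ^^ j) T (U n (-t) (Mia n m i a))) (U n (-t) (Mia n m i b))"
      by (rule ipH_unimod[OF e])
    finally show "ipH n m ((sigma n m ^^ j) T (Mia n m i (U n (-t) a))) (Mia n m i (U n (-t) b))
        = ipH n m ((sigma n m ^^ j) T (U n (-t) (Mia n m i a))) (U n (-t) (Mia n m i b))" .
  qed
  also have "\<dots> = (\<Sum>i<n. ipH n m ((sigma n m ^^ j) (Wt n m T t) (Mia n m i a)) (Mia n m i b))"
    by (rule sum.cong[OF refl]) (auto intro!: Suc.IH Mia_Hm[OF m] Suc.prems)
  also have "\<dots> = ipH n m ((sigma n m ^^ Suc j) (Wt n m T t) a) b"
    using sigma_ip[OF sigma_pow[OF Wt_maps[OF T]] Suc.prems] by simp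
  finally show ?case .
qed

lemma combo_Hm: "maps n m X \<Longrightarrow> maps n m (combo n m X)"
  unfolding maps_def combo_def
  by (auto intro!: Hm_sum Hm_scale sigma_pow[unfolded maps_def, rule_format])

lemma combo_ip:
  assumes X: "maps n m X" and a: "a \<in> Hm n m" and b: "b \<in> Hm n m"
  shows "ipH n m (combo n m X a) b = (\<Sum>j<m. coef m j * ipH n m ((sigma n m ^^ j) X a) b)"
proof -
  have s: "\<And>j. (sigma n m ^^ j) X a \<in> Hm n m" using sigma_pow[OF X] a by (auto simp: maps_def)
  have "ipH n m (combo n m X a) b = (\<Sum>j<m. ipH n m (\<lambda>\<alpha>. coef m j * (sigma n m ^^ j) X a \<alpha>) b)"
    unfolding combo_def coef_def by (rule ipH_sum1) (auto intro!: Hm_scale s b)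
  thus ?thesis by (simp add: ipH_scale1)
qed

lemma oplus_Hmn: "maps n m X \<Longrightarrow> F \<in> Hmn n m \<Longrightarrow> oplus n X F \<in> Hmn n m"
  by (auto simp: oplus_def Hmn_def maps_def)

lemma ipHn_oplus:
  assumes X: "maps n m X" and F: "F \<in> Hmn n m" and G: "G \<in> Hmn n m"
  shows "ipHn n m (oplus n (combo n m X) F) G = RS n m X F G"
  unfolding ipHn_def RS_def oplus_def
  by (rule sum.cong) (use F G in \<open>auto simp: Hmn_def combo_ip[OF X]\<close>)

end

definition Fv :: "nat \<Rightarrow> real \<Rightarrow> hvec \<Rightarrow> hvec" where
  "Fv n s F = (\<lambda>i. U n s (F i))"

lemma Fv_Hmn: "F \<in> Hmn n m \<Longrightarrow> Fv n s F \<in> Hmn n m"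
  by (auto simp: Fv_def Hmn_def U_zero U_Hm)

lemma Mz_Fv: "Mz n (Fv n s F) = (\<lambda>\<alpha>. exp (- (\<i> * of_real s)) * U n s (Mz n F) \<alpha>)"
proof -
  have "Mz n (Fv n s F) = (\<lambda>\<alpha>. \<Sum>i<n. exp (- (\<i> * of_real s)) * U n s (Mzi i (F i)) \<alpha>)"
    unfolding Mz_def Fv_def by (rule ext, rule sum.cong) (auto simp: Mzi_U)
  thus ?thesis by (simp add: Mz_def U_eq sum_distrib_left ac_simps)
qed

lemma delta_cU: "delta n m (\<lambda>\<alpha>. c * U n s x \<alpha>) = (\<lambda>\<alpha>. c * U n s (delta n m x) \<alpha>)"
  by (simp add: delta_eq U_eq ac_simps)

lemma Mz'_Fv: "Mz' n m (Fv n s F) = (\<lambda>\<alpha>. exp (- (\<i> * of_real s)) * U n s (Mz' n m F) \<alpha>)"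
  unfolding Mz'_def Mz_Fv delta_cU ..

lemma Pe_Fv: "Pe n m (Fv n s F) = Fv n s (Pe n m F)"
proof -
  have "Pe n m (Fv n s F) = vec n m (\<lambda>\<alpha>. exp (- (\<i> * of_real s)) * U n s (delta n m (Mz n F)) \<alpha>)"
    unfolding Pe_def Mz_Fv delta_cU ..
  also have "\<dots> = Fv n s (Pe n m F)"
    unfolding Pe_def Fv_def vec_def
    by (rule ext) (auto simp: Mia_scale Mia_U U_zero exp_minus mult.assoc[symmetric])
  finally show ?thesis .
qed

lemma RS_Fv:
  assumes m: "1 \<le> m" and T: "maps n m T" and H: "hom n m T" and F: "F \<in> Hmn n m" and G: "G \<in> Hmn n m"
  shows "RS n m T (Fv n (-t) F) (Fv n (-t) G) = RS n m (Wt n m T t) F G"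
  unfolding RS_def Fv_def
  by (intro sum.cong refl) (use F G in \<open>auto simp: Hmn_def sig_conj[OF m T H]\<close>)

lemma per_t:
  assumes m: "1 \<le> m" and T: "maps n m T" and H: "hom n m T"
    and hyp: "\<forall>F\<in>Hmn n m. Mz'_adj n m (T (Mz' n m F)) =
           projIm n m (oplus n (combo n m T) (projIm n m F))"
    and F: "F \<in> Hmn n m" and G: "G \<in> Hmn n m"
  shows "ipH n m (Wt n m T t (Mz' n m F)) (Mz' n m G) = RS n m (Wt n m T t) (Pe n m F) (Pe n m G)"
proof -
  let ?F = "Fv n (-t) F" and ?G = "Fv n (-t) G"
  let ?e = "exp (\<i> * complex_of_real t)"
  have F': "?F \<in> Hmn n m" and G': "?G \<in> Hmn n m" using F G by (auto intro: Fv_Hmn)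
  have x: "Mz' n m F \<in> Hm n m" and y: "Mz' n m G \<in> Hm n m" using F G by (auto intro: Mz'_Hm[OF m])
  have TF: "T (Mz' n m ?F) \<in> Hm n m" using T Mz'_Hm[OF m F'] by (auto simp: maps_def)
  have PF: "Pe n m ?F \<in> Hmn n m" by (rule Pe_Hmn[OF m F'])
  have HH: "oplus n (combo n m T) (Pe n m ?F) \<in> Hmn n m" by (rule oplus_Hmn[OF m combo_Hm[OF m T] PF])
  have e: "cmod ?e = 1" by simp
  have "ipHn n m (Mz'_adj n m (T (Mz' n m ?F))) ?G = ipHn n m (projIm n m (oplus n (combo n m T) (projIm n m ?F))) ?G"
    using hyp F' by simp
  hence eq: "ipH n m (T (Mz' n m ?F)) (Mz' n m ?G) = ipHn n m (Pe n m (oplus n (combo n m T) (Pe n m ?F))) ?G"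
    by (simp add: ipHn_Mz'adj[OF m TF G'] projIm_eq[OF m F'] projIm_eq[OF m HH])
  have "ipH n m (Wt n m T t (Mz' n m F)) (Mz' n m G) = ipH n m (T (U n (-t) (Mz' n m F))) (U n (-t) (Mz' n m G))"
    by (simp add: Wt_def U_adj_eq[OF x] U_adj_ident)
  also have "\<dots> = ipH n m (\<lambda>\<alpha>. ?e * T (U n (-t) (Mz' n m F)) \<alpha>) (\<lambda>\<alpha>. ?e * U n (-t) (Mz' n m G) \<alpha>)"
    by (rule ipH_unimod[OF e, symmetric])
  also have "\<dots> = ipH n m (T (Mz' n m ?F)) (Mz' n m ?G)"
    using H U_Hm[OF x] by (simp add: Mz'_Fv hom_def)
  also have "\<dots> = ipHn n m (oplus n (combo n m T) (Pe n m ?F)) (Pe n m ?G)"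
    unfolding eq by (rule Pe_sa[OF m HH G'])
  also have "\<dots> = RS n m T (Pe n m ?F) (Pe n m ?G)"
    by (rule ipHn_oplus[OF m T PF Pe_Hmn[OF m G']])
  also have "\<dots> = RS n m (Wt n m T t) (Pe n m F) (Pe n m G)"
    unfolding Pe_Fv by (rule RS_Fv[OF m T H Pe_Hmn[OF m F] Pe_Hmn[OF m G]])
  finally show ?thesis .
qed


lemma infsum_split_fin:
  fixes w :: "'a \<Rightarrow> real"
  assumes s: "w summable_on A" and F: "finite F" "F \<subseteq> A"
  shows "infsum w A = sum w F + infsum w (A - F)"
proof -
  have "A = F \<union> (A - F)" using F by blast
  hence "infsum w A = infsum w (F \<union> (A - F))" by simp
  also have "\<dots> = infsum w F + infsum w (A - F)"
    by (rule infsum_Un_disjoint) (use s F in \<open>auto intro: summable_on_subset\<close>)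
  finally show ?thesis using F by simp
qed

lemma eu_diff_bound: "(cmod (eu n s \<alpha> - eu n s' \<alpha>))\<^sup>2 \<le> 4"
proof -
  have "cmod (eu n s \<alpha> - eu n s' \<alpha>) \<le> cmod (eu n s \<alpha>) + cmod (eu n s' \<alpha>)" by (rule norm_triangle_ineq4)
  hence "cmod (eu n s \<alpha> - eu n s' \<alpha>) \<le> 2" by (simp add: eu_norm)
  hence "(cmod (eu n s \<alpha> - eu n s' \<alpha>))\<^sup>2 \<le> 2\<^sup>2" by (intro power_mono) auto
  thus ?thesis by simp
qed

lemma nsq_Udiff:
  "nsq n m (\<lambda>\<alpha>. U n s x \<alpha> - U n s' x \<alpha>) = (\<Sum>\<^sub>\<infinity>\<alpha>\<in>MI n. (cmod (eu n s \<alpha> - eu n s' \<alpha>))\<^sup>2 * ((cmod (x \<alpha>))\<^sup>2 / rho n m \<alpha>))"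
  unfolding nsq_def U_eq
  by (rule infsum_cong) (simp add: left_diff_distrib[symmetric] norm_mult power_mult_distrib)

lemma cont_U:
  assumes x: "x \<in> Hm n m"
  shows "((\<lambda>t. nsq n m (\<lambda>\<alpha>. U n (-t) x \<alpha> - U n (-t0) x \<alpha>)) \<longlongrightarrow> 0) (at t0)"
proof (rule order_tendstoI)
  fix a :: real assume "a < 0"
  thus "\<forall>\<^sub>F t in at t0. a < nsq n m (\<lambda>\<alpha>. U n (-t) x \<alpha> - U n (-t0) x \<alpha>)"
    using nsq_nonneg by (auto intro!: always_eventually) (metis less_le_trans)
next
  fix \<epsilon> :: real assume e: "0 < \<epsilon>"
  let ?w = "\<lambda>\<alpha>. (cmod (x \<alpha>))\<^sup>2 / rho n m \<alpha>"
  let ?q = "\<lambda>t \<alpha>. (cmod (eu n (-t) \<alpha> - eu n (-t0) \<alpha>))\<^sup>2 * ?w \<alpha>"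
  have w: "?w summable_on MI n" by (rule HmD2[OF x])
  have w0: "0 \<le> ?w \<alpha>" for \<alpha> using rho_pos[of n m \<alpha>] by simp
  have hs: "(?w has_sum nsq n m x) (MI n)" unfolding nsq_def using w by (rule has_sum_infsum)
  obtain F where F: "finite F" "F \<subseteq> MI n" and d: "dist (sum ?w F) (nsq n m x) \<le> \<epsilon> / 8"
    using has_sum_finite_approximation[OF hs, of "\<epsilon>/8"] e by auto
  have tail: "infsum ?w (MI n - F) \<le> \<epsilon> / 8"
    using infsum_split_fin[OF w F] d by (simp add: nsq_def dist_real_def)
  have qs: "?q t summable_on MI n" for t
  proof (rule summable_on_comparison_test[of "\<lambda>\<alpha>. 4 * ?w \<alpha>"])
    show "(\<lambda>\<alpha>. 4 * ?w \<alpha>) summable_on MI n" using w by (rule summable_on_cmult_right)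
    show "?q t \<alpha> \<le> 4 * ?w \<alpha>" for \<alpha> using eu_diff_bound w0[of \<alpha>] by (intro mult_right_mono) auto
    show "0 \<le> ?q t \<alpha>" for \<alpha> by (rule mult_nonneg_nonneg[OF zero_le_power2 w0])
  qed
  have bnd: "nsq n m (\<lambda>\<alpha>. U n (-t) x \<alpha> - U n (-t0) x \<alpha>) \<le> sum (?q t) F + \<epsilon> / 2" for t
  proof -
    have "nsq n m (\<lambda>\<alpha>. U n (-t) x \<alpha> - U n (-t0) x \<alpha>) = sum (?q t) F + infsum (?q t) (MI n - F)"
      unfolding nsq_Udiff by (rule infsum_split_fin[OF qs F])
    also have "infsum (?q t) (MI n - F) \<le> infsum (\<lambda>\<alpha>. 4 * ?w \<alpha>) (MI n - F)"
    proof (rule infsum_mono)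
      show "?q t summable_on MI n - F" using qs by (rule summable_on_subset) auto
      show "(\<lambda>\<alpha>. 4 * ?w \<alpha>) summable_on MI n - F"
        using summable_on_cmult_right[OF w, of 4] by (rule summable_on_subset) auto
      show "?q t \<alpha> \<le> 4 * ?w \<alpha>" for \<alpha> using eu_diff_bound w0[of \<alpha>] by (intro mult_right_mono) auto
    qed
    also have "\<dots> = 4 * infsum ?w (MI n - F)" by (rule infsum_cmult_right')
    finally show ?thesis using tail by linarith
  qed
  have lim: "((\<lambda>t. sum (?q t) F) \<longlongrightarrow> sum (?q t0) F) (at t0)"
    unfolding eu_def by (intro tendsto_intros)
  have lim0: "((\<lambda>t. sum (?q t) F) \<longlongrightarrow> 0) (at t0)" using lim by simp
  have "\<forall>\<^sub>F t in at t0. sum (?q t) F < \<epsilon> / 2" by (rule order_tendstoD(2)[OF lim0]) (use e in simp)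
  thus "\<forall>\<^sub>F t in at t0. nsq n m (\<lambda>\<alpha>. U n (-t) x \<alpha> - U n (-t0) x \<alpha>) < \<epsilon>"
  proof eventually_elim
    case (elim t) show ?case using bnd[of t] elim e by linarith
  qed
qed


context
  fixes n m :: nat and T :: "hel \<Rightarrow> hel"
  assumes m: "1 \<le> m" and bop: "bounded_op n m T"
begin

lemma T_maps: "maps n m T"
  using bop by (simp add: bounded_op_def maps_def)

lemma T_hom: "hom n m T"
  using bop by (simp add: bounded_op_def hom_def)

lemma T_in: "f \<in> Hm n m \<Longrightarrow> T f \<in> Hm n m"
  using bop by (simp add: bounded_op_def)

lemma T_diff:
  assumes f: "f \<in> Hm n m" and g: "g \<in> Hm n m"
  shows "T (\<lambda>\<alpha>. f \<alpha> - g \<alpha>) = (\<lambda>\<alpha>. T f \<alpha> - T g \<alpha>)"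
proof -
  have g': "(\<lambda>\<alpha>. (-1) * g \<alpha>) \<in> Hm n m" by (rule Hm_scale[OF g])
  have "T (\<lambda>\<alpha>. f \<alpha> + (-1) * g \<alpha>) = (\<lambda>\<alpha>. T f \<alpha> + T (\<lambda>\<alpha>. (-1) * g \<alpha>) \<alpha>)"
  proof -
    have add: "\<forall>f\<in>Hm n m. \<forall>g\<in>Hm n m. T (\<lambda>\<alpha>. f \<alpha> + g \<alpha>) = (\<lambda>\<alpha>. T f \<alpha> + T g \<alpha>)"
      using bop unfolding bounded_op_def by blast
    show ?thesis using add[rule_format, OF f g'] .
  qed
  also have "T (\<lambda>\<alpha>. (-1) * g \<alpha>) = (\<lambda>\<alpha>. (-1) * T g \<alpha>)"
    using bop g unfolding bounded_op_def by blast
  finally show ?thesis by simp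
qed

lemma T_bound: "\<exists>C\<ge>0. \<forall>f\<in>Hm n m. nsq n m (T f) \<le> C * nsq n m f"
proof -
  obtain C where C: "\<forall>f\<in>Hm n m. Re (ipH n m (T f) (T f)) \<le> C * Re (ipH n m f f)"
    using bop unfolding bounded_op_def by blast
  show ?thesis
  proof (intro exI[of _ "max C 0"] conjI ballI)
    fix f assume f: "f \<in> Hm n m"
    have "Re (ipH n m (T f) (T f)) \<le> C * Re (ipH n m f f)" using C f by blast
    hence "nsq n m (T f) \<le> C * nsq n m f" unfolding ipH_self[OF T_in[OF f]] ipH_self[OF f] by simp
    also have "\<dots> \<le> max C 0 * nsq n m f" by (intro mult_right_mono) (auto simp: nsq_nonneg)
    finally show "nsq n m (T f) \<le> max C 0 * nsq n m f" .
  qed simp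
qed

definition CT :: real where "CT = (SOME C. C \<ge> 0 \<and> (\<forall>f\<in>Hm n m. nsq n m (T f) \<le> C * nsq n m f))"

lemma CT: "CT \<ge> 0" "f \<in> Hm n m \<Longrightarrow> nsq n m (T f) \<le> CT * nsq n m f"
  using someI_ex[OF T_bound] unfolding CT_def by auto

lemma psi_eq:
  assumes f: "f \<in> Hm n m" and g: "g \<in> Hm n m"
  shows "ipH n m (Wt n m T t f) g = ipH n m (T (U n (-t) f)) (U n (-t) g)"
  by (simp add: Wt_def U_adj_eq[OF f] U_adj_ident)

lemma psi_bound:
  assumes f: "f \<in> Hm n m" and g: "g \<in> Hm n m"
  shows "cmod (ipH n m (Wt n m T t f) g) \<le> sqrt (CT * nsq n m f) * sqrt (nsq n m g)"
proof -
  have "cmod (ipH n m (Wt n m T t f) g) \<le> sqrt (nsq n m (T (U n (-t) f))) * sqrt (nsq n m (U n (-t) g))"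
    unfolding psi_eq[OF f g] by (rule cauchy_schwarz) (auto intro: T_in U_Hm f g)
  also have "\<dots> \<le> sqrt (CT * nsq n m f) * sqrt (nsq n m g)"
    using CT(2)[OF U_Hm[OF f], of "-t"] by (auto simp: nsq_U nsq_nonneg intro!: mult_right_mono)
  finally show ?thesis .
qed

lemma psi_cont:
  assumes f: "f \<in> Hm n m" and g: "g \<in> Hm n m"
  shows "isCont (\<lambda>t. ipH n m (Wt n m T t f) g) t0"
proof -
  let ?a = "\<lambda>t. U n (-t) f" and ?b = "\<lambda>t. U n (-t) g"
  have a: "?a t \<in> Hm n m" and b: "?b t \<in> Hm n m" for t using f g by (auto intro: U_Hm)
  have da: "(\<lambda>\<alpha>. ?a t \<alpha> - ?a t0 \<alpha>) \<in> Hm n m" and db: "(\<lambda>\<alpha>. ?b t \<alpha> - ?b t0 \<alpha>) \<in> Hm n m" for t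
    using a b by (auto intro: Hm_diff)
  define B where "B t = sqrt (CT * nsq n m (\<lambda>\<alpha>. ?a t \<alpha> - ?a t0 \<alpha>)) * sqrt (nsq n m g)
     + sqrt (nsq n m (T (?a t0))) * sqrt (nsq n m (\<lambda>\<alpha>. ?b t \<alpha> - ?b t0 \<alpha>))" for t
  have est: "cmod (ipH n m (Wt n m T t f) g - ipH n m (Wt n m T t0 f) g) \<le> B t" for t
  proof -
    have "ipH n m (Wt n m T t f) g - ipH n m (Wt n m T t0 f) g
        = ipH n m (T (?a t)) (?b t) - ipH n m (T (?a t0)) (?b t0)"
      by (simp add: psi_eq[OF f g])
    also have "\<dots> = ipH n m (\<lambda>\<alpha>. T (?a t) \<alpha> - T (?a t0) \<alpha>) (?b t) + ipH n m (T (?a t0)) (\<lambda>\<alpha>. ?b t \<alpha> - ?b t0 \<alpha>)"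
      by (simp add: ipH_diff1 ipH_diff2 T_in a b)
    also have "(\<lambda>\<alpha>. T (?a t) \<alpha> - T (?a t0) \<alpha>) = T (\<lambda>\<alpha>. ?a t \<alpha> - ?a t0 \<alpha>)"
      by (rule T_diff[OF a a, symmetric])
    finally have eq: "ipH n m (Wt n m T t f) g - ipH n m (Wt n m T t0 f) g
        = ipH n m (T (\<lambda>\<alpha>. ?a t \<alpha> - ?a t0 \<alpha>)) (?b t) + ipH n m (T (?a t0)) (\<lambda>\<alpha>. ?b t \<alpha> - ?b t0 \<alpha>)" .
    have c1: "cmod (ipH n m (T (\<lambda>\<alpha>. ?a t \<alpha> - ?a t0 \<alpha>)) (?b t)) \<le> sqrt (CT * nsq n m (\<lambda>\<alpha>. ?a t \<alpha> - ?a t0 \<alpha>)) * sqrt (nsq n m g)"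
    proof -
      have "cmod (ipH n m (T (\<lambda>\<alpha>. ?a t \<alpha> - ?a t0 \<alpha>)) (?b t)) \<le> sqrt (nsq n m (T (\<lambda>\<alpha>. ?a t \<alpha> - ?a t0 \<alpha>))) * sqrt (nsq n m (?b t))"
        by (rule cauchy_schwarz) (auto intro: T_in da b)
      also have "\<dots> \<le> sqrt (CT * nsq n m (\<lambda>\<alpha>. ?a t \<alpha> - ?a t0 \<alpha>)) * sqrt (nsq n m g)"
        using CT(2)[OF da[of t]] by (auto simp: nsq_U nsq_nonneg intro!: mult_right_mono)
      finally show ?thesis .
    qed
    have c2: "cmod (ipH n m (T (?a t0)) (\<lambda>\<alpha>. ?b t \<alpha> - ?b t0 \<alpha>)) \<le> sqrt (nsq n m (T (?a t0))) * sqrt (nsq n m (\<lambda>\<alpha>. ?b t \<alpha> - ?b t0 \<alpha>))"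
      by (rule cauchy_schwarz) (auto intro: T_in a db)
    show ?thesis unfolding eq B_def using c1 c2 norm_triangle_ineq[of "ipH n m (T (\<lambda>\<alpha>. ?a t \<alpha> - ?a t0 \<alpha>)) (?b t)"
       "ipH n m (T (?a t0)) (\<lambda>\<alpha>. ?b t \<alpha> - ?b t0 \<alpha>)"] by linarith
  qed
  have "(B \<longlongrightarrow> sqrt (CT * 0) * sqrt (nsq n m g) + sqrt (nsq n m (T (?a t0))) * sqrt 0) (at t0)"
    unfolding B_def by (intro tendsto_intros cont_U f g)
  hence B0: "(B \<longlongrightarrow> 0) (at t0)" by simp
  have "((\<lambda>t. ipH n m (Wt n m T t f) g - ipH n m (Wt n m T t0 f) g) \<longlongrightarrow> 0) (at t0)"
    by (rule Lim_null_comparison[OF always_eventually B0]) (use est in blast)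
  hence "((\<lambda>t. ipH n m (Wt n m T t f) g) \<longlongrightarrow> ipH n m (Wt n m T t0 f) g) (at t0)"
    by (rule LIM_zero_cancel)
  thus ?thesis by (simp add: isCont_def)
qed

lemma integrand_integrable:
  assumes f: "f \<in> Hm n m" and g: "g \<in> Hm n m"
  shows "(\<lambda>t. exp (- (\<i> * of_int k * of_real t)) * ipH n m (Wt n m T t f) g) integrable_on {0..2*pi}"
proof (rule integrable_continuous_interval)
  have "continuous_on {0..2*pi} (\<lambda>t. ipH n m (Wt n m T t f) g)"
    by (rule continuous_at_imp_continuous_on) (use psi_cont[OF f g] in blast)
  thus "continuous_on {0..2*pi} (\<lambda>t. exp (- (\<i> * of_int k * of_real t)) * ipH n m (Wt n m T t f) g)"
    by (intro continuous_intros)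
qed

end

definition ee :: "mi \<Rightarrow> hel" where "ee \<alpha> = (\<lambda>\<beta>. if \<beta> = \<alpha> then 1 else 0)"

lemma fin_Hm:
  assumes "finite F" "F \<subseteq> MI n"
  shows "(\<lambda>\<beta>. if \<beta> \<in> F then g \<beta> else 0) \<in> Hm n m"
proof -
  have "(\<lambda>\<alpha>. (cmod (if \<alpha> \<in> F then g \<alpha> else 0))\<^sup>2 / rho n m \<alpha>) summable_on MI n"
  proof (rule summable_on_cong_neutral[THEN iffD1])
    show "(\<lambda>\<alpha>. (cmod (if \<alpha> \<in> F then g \<alpha> else 0))\<^sup>2 / rho n m \<alpha>) summable_on F" using assms by simp
  qed (use assms in auto)
  thus ?thesis using assms by (auto simp: Hm_def)
qed

lemma fin_sum_eq: "finite F \<Longrightarrow> (\<lambda>\<beta>. if \<beta> \<in> F then g \<beta> else 0) = (\<lambda>\<beta>. \<Sum>\<alpha>\<in>F. g \<alpha> * ee \<alpha> \<beta>)"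
proof (rule ext)
  fix \<beta> assume F: "finite F"
  have "(\<Sum>\<alpha>\<in>F. g \<alpha> * ee \<alpha> \<beta>) = (\<Sum>\<alpha>\<in>F. if \<beta> = \<alpha> then g \<alpha> else 0)"
    by (rule sum.cong) (auto simp: ee_def)
  also have "\<dots> = (if \<beta> \<in> F then g \<beta> else 0)" using F by (simp add: sum.delta')
  finally show "(if \<beta> \<in> F then g \<beta> else 0) = (\<Sum>\<alpha>\<in>F. g \<alpha> * ee \<alpha> \<beta>)" by simp
qed

lemma nsq_fin:
  assumes "finite F" "F \<subseteq> MI n"
  shows "nsq n m (\<lambda>\<beta>. if \<beta> \<in> F then g \<beta> else 0) = (\<Sum>\<alpha>\<in>F. (cmod (g \<alpha>))\<^sup>2 / rho n m \<alpha>)"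
proof -
  have "nsq n m (\<lambda>\<beta>. if \<beta> \<in> F then g \<beta> else 0) = infsum (\<lambda>\<alpha>. (cmod (g \<alpha>))\<^sup>2 / rho n m \<alpha>) F"
    unfolding nsq_def by (rule infsum_cong_neutral) (use assms in auto)
  thus ?thesis using assms by simp
qed

lemma nsq_cofin:
  assumes g: "g \<in> Hm n m" and F: "finite F" "F \<subseteq> MI n"
  shows "nsq n m (\<lambda>\<beta>. g \<beta> - (if \<beta> \<in> F then g \<beta> else 0)) = nsq n m g - (\<Sum>\<alpha>\<in>F. (cmod (g \<alpha>))\<^sup>2 / rho n m \<alpha>)"
proof -
  let ?w = "\<lambda>\<alpha>. (cmod (g \<alpha>))\<^sup>2 / rho n m \<alpha>"
  have "nsq n m (\<lambda>\<beta>. g \<beta> - (if \<beta> \<in> F then g \<beta> else 0)) = infsum (\<lambda>\<alpha>. (cmod (g \<alpha> - (if \<alpha> \<in> F then g \<alpha> else 0)))\<^sup>2 / rho n m \<alpha>) (MI n)"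
    by (simp add: nsq_def)
  also have "\<dots> = infsum ?w (MI n - F)"
    by (rule infsum_cong_neutral) auto
  also have "\<dots> = nsq n m g - sum ?w F"
    using infsum_split_fin[OF HmD2[OF g] F] by (simp add: nsq_def)
  finally show ?thesis .
qed

lemma riesz:
  fixes \<phi> :: "hel \<Rightarrow> complex"
  assumes add: "\<And>g h. g \<in> Hm n m \<Longrightarrow> h \<in> Hm n m \<Longrightarrow> \<phi> (\<lambda>\<alpha>. g \<alpha> + h \<alpha>) = \<phi> g + \<phi> h"
    and scl: "\<And>c g. g \<in> Hm n m \<Longrightarrow> \<phi> (\<lambda>\<alpha>. c * g \<alpha>) = cnj c * \<phi> g"
    and bnd: "\<And>g. g \<in> Hm n m \<Longrightarrow> cmod (\<phi> g) \<le> B * sqrt (nsq n m g)"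
  shows "\<exists>h\<in>Hm n m. \<forall>g\<in>Hm n m. ipH n m h g = \<phi> g"
proof -
  have eH: "ee \<alpha> \<in> Hm n m" if "\<alpha> \<in> MI n" for \<alpha>
    using fin_Hm[of "{\<alpha>}" n "\<lambda>_. 1" m] that by (simp add: ee_def[abs_def])
  have \<phi>0: "\<phi> (\<lambda>_. 0) = 0" using scl[OF Hm_zero, of 0] by simp
  have \<phi>sum: "\<phi> (\<lambda>\<beta>. \<Sum>\<alpha>\<in>F. c \<alpha> * ee \<alpha> \<beta>) = (\<Sum>\<alpha>\<in>F. cnj (c \<alpha>) * \<phi> (ee \<alpha>))"
    if "finite F" "F \<subseteq> MI n" for F c
    using that
  proof (induction F rule: finite_induct)
    case empty then show ?case using \<phi>0 by simp
  next
    case (insert x F)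
    have x: "(\<lambda>\<beta>. c x * ee x \<beta>) \<in> Hm n m" using insert eH by (auto intro: Hm_scale)
    have s: "(\<lambda>\<beta>. \<Sum>\<alpha>\<in>F. c \<alpha> * ee \<alpha> \<beta>) \<in> Hm n m" using insert eH by (auto intro!: Hm_sum Hm_scale)
    have "\<phi> (\<lambda>\<beta>. \<Sum>\<alpha>\<in>insert x F. c \<alpha> * ee \<alpha> \<beta>) = \<phi> (\<lambda>\<beta>. c x * ee x \<beta> + (\<Sum>\<alpha>\<in>F. c \<alpha> * ee \<alpha> \<beta>))"
      using insert by simp
    also have "\<dots> = \<phi> (\<lambda>\<beta>. c x * ee x \<beta>) + \<phi> (\<lambda>\<beta>. \<Sum>\<alpha>\<in>F. c \<alpha> * ee \<alpha> \<beta>)" by (rule add[OF x s])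
    also have "\<dots> = cnj (c x) * \<phi> (ee x) + (\<Sum>\<alpha>\<in>F. cnj (c \<alpha>) * \<phi> (ee \<alpha>))"
      using insert eH by (simp add: scl)
    finally show ?case using insert by simp
  qed
  define h where "h \<alpha> = (if \<alpha> \<in> MI n then complex_of_real (rho n m \<alpha>) * \<phi> (ee \<alpha>) else 0)" for \<alpha>
  have key: "\<phi> (\<lambda>\<beta>. if \<beta> \<in> F then g \<beta> else 0) = (\<Sum>\<alpha>\<in>F. h \<alpha> * cnj (g \<alpha>) / complex_of_real (rho n m \<alpha>))"
    if F: "finite F" "F \<subseteq> MI n" for F g
  proof -
    have "\<phi> (\<lambda>\<beta>. if \<beta> \<in> F then g \<beta> else 0) = (\<Sum>\<alpha>\<in>F. cnj (g \<alpha>) * \<phi> (ee \<alpha>))"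
      unfolding fin_sum_eq[OF F(1)] by (rule \<phi>sum[OF F])
    also have "\<dots> = (\<Sum>\<alpha>\<in>F. h \<alpha> * cnj (g \<alpha>) / complex_of_real (rho n m \<alpha>))"
    proof (rule sum.cong[OF refl])
      fix \<alpha> assume "\<alpha> \<in> F" hence a: "\<alpha> \<in> MI n" using F by auto
      have "complex_of_real (rho n m \<alpha>) \<noteq> 0" using rho_pos[of n m \<alpha>] by simp
      thus "cnj (g \<alpha>) * \<phi> (ee \<alpha>) = h \<alpha> * cnj (g \<alpha>) / complex_of_real (rho n m \<alpha>)"
        using a by (simp add: h_def field_simps)
    qed
    finally show ?thesis .
  qed
  let ?wh = "\<lambda>\<alpha>. (cmod (h \<alpha>))\<^sup>2 / rho n m \<alpha>"
  have wh_sum: "sum ?wh F \<le> B\<^sup>2" if F: "finite F" "F \<subseteq> MI n" for F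
  proof -
    have "\<phi> (\<lambda>\<beta>. if \<beta> \<in> F then h \<beta> else 0) = (\<Sum>\<alpha>\<in>F. h \<alpha> * cnj (h \<alpha>) / complex_of_real (rho n m \<alpha>))"
      by (rule key[OF F])
    also have "\<dots> = (\<Sum>\<alpha>\<in>F. complex_of_real (?wh \<alpha>))"
      by (rule sum.cong[OF refl]) (simp only: complex_norm_square[symmetric] of_real_divide)
    also have "\<dots> = complex_of_real (sum ?wh F)" by (simp only: of_real_sum)
    finally have e: "\<phi> (\<lambda>\<beta>. if \<beta> \<in> F then h \<beta> else 0) = complex_of_real (sum ?wh F)" .
    have S0: "0 \<le> sum ?wh F" by (intro sum_nonneg divide_nonneg_pos rho_pos) auto
    have "sum ?wh F = cmod (\<phi> (\<lambda>\<beta>. if \<beta> \<in> F then h \<beta> else 0))"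
      unfolding e using S0 by (simp only: norm_of_real abs_of_nonneg)
    also have "\<dots> \<le> B * sqrt (nsq n m (\<lambda>\<beta>. if \<beta> \<in> F then h \<beta> else 0))" by (rule bnd[OF fin_Hm[OF F]])
    also have "nsq n m (\<lambda>\<beta>. if \<beta> \<in> F then h \<beta> else 0) = sum ?wh F" by (rule nsq_fin[OF F])
    finally have "sum ?wh F \<le> B * sqrt (sum ?wh F)" .
    hence "sqrt (sum ?wh F) * sqrt (sum ?wh F) \<le> B * sqrt (sum ?wh F)" using S0 by simp
    hence "sqrt (sum ?wh F) \<le> B \<or> sqrt (sum ?wh F) = 0"
    proof (cases "sqrt (sum ?wh F) = 0")
      case False
      hence "0 < sqrt (sum ?wh F)" using S0 by simp
      thus ?thesis using mult_right_le_imp_le[OF \<open>sqrt (sum ?wh F) * sqrt (sum ?wh F) \<le> B * sqrt (sum ?wh F)\<close>] by simp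
    qed simp
    thus ?thesis
    proof
      assume "sqrt (sum ?wh F) \<le> B"
      hence "(sqrt (sum ?wh F))\<^sup>2 \<le> B\<^sup>2" by (rule power_mono) (rule real_sqrt_ge_zero[OF S0])
      thus ?thesis using S0 by simp
    next
      assume "sqrt (sum ?wh F) = 0" thus ?thesis by simp
    qed
  qed
  have hH: "h \<in> Hm n m"
  proof -
    have "?wh summable_on MI n"
      by (rule nonneg_bdd_above_summable_on) (auto intro!: divide_nonneg_pos rho_pos bdd_aboveI[where M="B\<^sup>2"] wh_sum)
    thus ?thesis by (auto simp: Hm_def h_def)
  qed
  show ?thesis
  proof (intro bexI[OF _ hH] ballI)
    fix g assume g: "g \<in> Hm n m"
    let ?gF = "\<lambda>F \<beta>. if \<beta> \<in> F then g \<beta> else 0"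
    let ?w = "\<lambda>\<alpha>. (cmod (g \<alpha>))\<^sup>2 / rho n m \<alpha>"
    have lim1: "((\<lambda>F. sum (\<lambda>\<alpha>. h \<alpha> * cnj (g \<alpha>) / complex_of_real (rho n m \<alpha>)) F) \<longlongrightarrow> ipH n m h g) (finite_subsets_at_top (MI n))"
      unfolding ipH_def by (rule infsum_tendsto[OF ip_summable[OF hH g]])
    have ev: "\<forall>\<^sub>F F in finite_subsets_at_top (MI n). \<phi> (?gF F) = sum (\<lambda>\<alpha>. h \<alpha> * cnj (g \<alpha>) / complex_of_real (rho n m \<alpha>)) F"
      by (rule eventually_finite_subsets_at_top_weakI) (rule key)
    have lim1': "((\<lambda>F. \<phi> (?gF F)) \<longlongrightarrow> ipH n m h g) (finite_subsets_at_top (MI n))"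
      using lim1 ev by (simp add: tendsto_cong)
    have limw: "((\<lambda>F. sum ?w F) \<longlongrightarrow> nsq n m g) (finite_subsets_at_top (MI n))"
      unfolding nsq_def by (rule infsum_tendsto[OF HmD2[OF g]])
    have limB: "((\<lambda>F. B * sqrt (nsq n m g - sum ?w F)) \<longlongrightarrow> B * sqrt (nsq n m g - nsq n m g)) (finite_subsets_at_top (MI n))"
      by (intro tendsto_intros limw)
    have ev2: "\<forall>\<^sub>F F in finite_subsets_at_top (MI n). norm (\<phi> g - \<phi> (?gF F)) \<le> B * sqrt (nsq n m g - sum ?w F)"
    proof (rule eventually_finite_subsets_at_top_weakI)
      fix F assume F: "finite F" "F \<subseteq> MI n"
      have gF: "?gF F \<in> Hm n m" by (rule fin_Hm[OF F])
      have d: "(\<lambda>\<beta>. g \<beta> - ?gF F \<beta>) \<in> Hm n m" by (rule Hm_diff[OF g gF])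
      have "\<phi> g = \<phi> (\<lambda>\<beta>. (g \<beta> - ?gF F \<beta>) + ?gF F \<beta>)" by simp
      also have "\<dots> = \<phi> (\<lambda>\<beta>. g \<beta> - ?gF F \<beta>) + \<phi> (?gF F)" by (rule add[OF d gF])
      finally have "\<phi> g - \<phi> (?gF F) = \<phi> (\<lambda>\<beta>. g \<beta> - ?gF F \<beta>)" by simp
      thus "norm (\<phi> g - \<phi> (?gF F)) \<le> B * sqrt (nsq n m g - sum ?w F)"
        using bnd[OF d] nsq_cofin[OF g F] by simp
    qed
    have "((\<lambda>F. \<phi> g - \<phi> (?gF F)) \<longlongrightarrow> 0) (finite_subsets_at_top (MI n))"
      by (rule Lim_null_comparison[OF ev2]) (use limB in simp)
    hence "((\<lambda>F. \<phi> g - (\<phi> g - \<phi> (?gF F))) \<longlongrightarrow> \<phi> g - 0) (finite_subsets_at_top (MI n))"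
      by (intro tendsto_intros)
    hence "((\<lambda>F. \<phi> (?gF F)) \<longlongrightarrow> \<phi> g) (finite_subsets_at_top (MI n))" by simp
    show "ipH n m h g = \<phi> g" by (rule tendsto_unique[OF finite_subsets_at_top_neq_bot lim1' \<open>((\<lambda>F. \<phi> (?gF F)) \<longlongrightarrow> \<phi> g) (finite_subsets_at_top (MI n))\<close>])
  qed
qed


lemma int_bound:
  fixes F :: "real \<Rightarrow> complex"
  assumes i: "F integrable_on {0..2*pi}" and b: "\<And>t. cmod (F t) \<le> Bd"
  shows "cmod (integral {0..2*pi} F) \<le> Bd * (2*pi)"
proof -
  have B0: "0 \<le> Bd" using b[of 0] norm_ge_zero order_trans by blast
  have "(F has_integral integral {0..2*pi} F) (cbox 0 (2*pi))"
    using integrable_integral[OF i] by (simp add: cbox_interval)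
  from has_integral_bound[OF B0 this] b show ?thesis by simp
qed

definition Ek :: "int \<Rightarrow> real \<Rightarrow> complex" where
  "Ek k t = exp (- (\<i> * of_int k * of_real t))"

lemma Ek_norm: "cmod (Ek k t) = 1"
proof -
  have "Ek k t = exp (\<i> * of_real (- (real_of_int k * t)))" by (simp add: Ek_def mult.assoc)
  thus ?thesis by (simp only: norm_exp_i_times)
qed

context
  fixes n m :: nat and T :: "hel \<Rightarrow> hel"
  assumes m: "1 \<le> m" and bop: "bounded_op n m T"
begin

lemma Tk_prop:
  assumes f: "f \<in> Hm n m"
  shows "Tk n m T k f \<in> Hm n m \<and> (\<forall>g\<in>Hm n m. ipH n m (Tk n m T k f) g =
      complex_of_real (1 / (2 * pi)) * integral {0..2*pi} (\<lambda>t. Ek k t * ipH n m (Wt n m T t f) g))"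
proof -
  let ?c = "complex_of_real (1 / (2 * pi))"
  define \<phi> where "\<phi> g = ?c * integral {0..2*pi} (\<lambda>t. Ek k t * ipH n m (Wt n m T t f) g)" for g
  have W: "Wt n m T t f \<in> Hm n m" for t using Wt_maps[OF m T_maps[OF m bop]] f by (auto simp: maps_def)
  have int: "(\<lambda>t. Ek k t * ipH n m (Wt n m T t f) g) integrable_on {0..2*pi}" if "g \<in> Hm n m" for g
    unfolding Ek_def by (rule integrand_integrable[OF m bop f that])
  have "\<exists>h\<in>Hm n m. \<forall>g\<in>Hm n m. ipH n m h g = \<phi> g"
  proof (rule riesz)
    fix g h assume g: "g \<in> Hm n m" and h: "h \<in> Hm n m"
    have "(\<lambda>t. Ek k t * ipH n m (Wt n m T t f) (\<lambda>\<alpha>. g \<alpha> + h \<alpha>)) =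
        (\<lambda>t. Ek k t * ipH n m (Wt n m T t f) g + Ek k t * ipH n m (Wt n m T t f) h)"
      by (rule ext) (simp add: ipH_add2[OF g h W] distrib_left)
    thus "\<phi> (\<lambda>\<alpha>. g \<alpha> + h \<alpha>) = \<phi> g + \<phi> h"
      unfolding \<phi>_def by (simp add: integral_add[OF int[OF g] int[OF h]] distrib_left)
  next
    fix c g assume g: "g \<in> Hm n m"
    have "(\<lambda>t. Ek k t * ipH n m (Wt n m T t f) (\<lambda>\<alpha>. c * g \<alpha>)) = (\<lambda>t. cnj c * (Ek k t * ipH n m (Wt n m T t f) g))"
      by (rule ext) (simp add: ipH_scale2 ac_simps)
    thus "\<phi> (\<lambda>\<alpha>. c * g \<alpha>) = cnj c * \<phi> g" unfolding \<phi>_def by simp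
  next
    fix g assume g: "g \<in> Hm n m"
    have b: "cmod (Ek k t * ipH n m (Wt n m T t f) g) \<le> sqrt (CT n m T * nsq n m f) * sqrt (nsq n m g)" for t
      using psi_bound[OF m bop f g, of t] by (simp add: norm_mult Ek_norm)
    have "cmod (\<phi> g) = (1 / (2*pi)) * cmod (integral {0..2*pi} (\<lambda>t. Ek k t * ipH n m (Wt n m T t f) g))"
      unfolding \<phi>_def by (simp add: norm_mult norm_divide)
    also have "\<dots> \<le> (1 / (2*pi)) * (sqrt (CT n m T * nsq n m f) * sqrt (nsq n m g) * (2*pi))"
      by (intro mult_left_mono int_bound[OF int[OF g] b]) auto
    also have "\<dots> = sqrt (CT n m T * nsq n m f) * sqrt (nsq n m g)" by simp
    finally show "cmod (\<phi> g) \<le> sqrt (CT n m T * nsq n m f) * sqrt (nsq n m g)" .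
  qed
  hence "\<exists>h. h \<in> Hm n m \<and> (\<forall>g\<in>Hm n m. ipH n m h g = \<phi> g)" by blast
  hence "Tk n m T k f \<in> Hm n m \<and> (\<forall>g\<in>Hm n m. ipH n m (Tk n m T k f) g = \<phi> g)"
    unfolding Tk_def \<phi>_def Wt_def Ek_def by (rule someI_ex)
  thus ?thesis unfolding \<phi>_def by simp
qed

lemma Tk_maps: "maps n m (Tk n m T k)"
  using Tk_prop by (auto simp: maps_def)

lemma sig_Tk_all:
  "\<forall>a\<in>Hm n m. \<forall>b\<in>Hm n m. (\<lambda>t. Ek k t * ipH n m ((sigma n m ^^ j) (Wt n m T t) a) b) integrable_on {0..2*pi} \<and>
    ipH n m ((sigma n m ^^ j) (Tk n m T k) a) b =
      complex_of_real (1 / (2 * pi)) * integral {0..2*pi} (\<lambda>t. Ek k t * ipH n m ((sigma n m ^^ j) (Wt n m T t) a) b)"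
proof (induction j)
  case 0
  show ?case using Tk_prop[of _ k] integrand_integrable[OF m bop, of _ _ k]
    by (simp add: Ek_def)
next
  case (Suc j)
  show ?case
  proof (intro ballI)
    fix a b assume a: "a \<in> Hm n m" and b: "b \<in> Hm n m"
    let ?c = "complex_of_real (1 / (2 * pi))"
    let ?Y = "\<lambda>i t. Ek k t * ipH n m ((sigma n m ^^ j) (Wt n m T t) (Mia n m i a)) (Mia n m i b)"
    have ab: "Mia n m i a \<in> Hm n m" "Mia n m i b \<in> Hm n m" if "i < n" for i
      using a b that by (auto intro: Mia_Hm[OF m])
    have IH: "?Y i integrable_on {0..2*pi}"
      "ipH n m ((sigma n m ^^ j) (Tk n m T k) (Mia n m i a)) (Mia n m i b) = ?c * integral {0..2*pi} (?Y i)"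
      if "i \<in> {..<n}" for i using Suc.IH ab that by auto
    have Wm: "maps n m ((sigma n m ^^ j) (Wt n m T t))" for t
      by (rule sigma_pow[OF m Wt_maps[OF m T_maps[OF m bop]]])
    have eqt: "Ek k t * ipH n m ((sigma n m ^^ Suc j) (Wt n m T t) a) b = (\<Sum>i<n. ?Y i t)" for t
      using sigma_ip[OF m Wm a b] by (simp add: sum_distrib_left)
    have Tm: "maps n m ((sigma n m ^^ j) (Tk n m T k))" by (rule sigma_pow[OF m Tk_maps])
    have "(\<lambda>t. \<Sum>i<n. ?Y i t) integrable_on {0..2*pi}" by (rule integrable_sum) (auto intro: IH)
    moreover have "ipH n m ((sigma n m ^^ Suc j) (Tk n m T k) a) b = ?c * integral {0..2*pi} (\<lambda>t. \<Sum>i<n. ?Y i t)"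
    proof -
      have isum: "integral {0..2*pi} (\<lambda>t. \<Sum>i<n. ?Y i t) = (\<Sum>i<n. integral {0..2*pi} (?Y i))"
        by (rule integral_sum) (auto intro: IH)
      have "ipH n m ((sigma n m ^^ Suc j) (Tk n m T k) a) b = (\<Sum>i<n. ipH n m ((sigma n m ^^ j) (Tk n m T k) (Mia n m i a)) (Mia n m i b))"
        using sigma_ip[OF m Tm a b] by simp
      also have "\<dots> = (\<Sum>i<n. ?c * integral {0..2*pi} (?Y i))" by (rule sum.cong[OF refl]) (rule IH(2))
      also have "\<dots> = ?c * integral {0..2*pi} (\<lambda>t. \<Sum>i<n. ?Y i t)" unfolding isum sum_distrib_left ..
      finally show ?thesis .
    qed
    ultimately show "(\<lambda>t. Ek k t * ipH n m ((sigma n m ^^ Suc j) (Wt n m T t) a) b) integrable_on {0..2*pi} \<and>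
      ipH n m ((sigma n m ^^ Suc j) (Tk n m T k) a) b =
      ?c * integral {0..2*pi} (\<lambda>t. Ek k t * ipH n m ((sigma n m ^^ Suc j) (Wt n m T t) a) b)"
      unfolding eqt by simp
  qed
qed

end

lemma double_int:
  fixes Y :: "nat \<Rightarrow> nat \<Rightarrow> real \<Rightarrow> complex"
  assumes i: "\<And>i j. i < n \<Longrightarrow> j < m \<Longrightarrow> Y i j integrable_on S"
  shows "(\<Sum>i<n. \<Sum>j<m. a j * (c * integral S (Y i j))) = c * integral S (\<lambda>t. \<Sum>i<n. \<Sum>j<m. a j * Y i j t)"
proof -
  have i1: "(\<lambda>t. a j * Y i j t) integrable_on S" if "i < n" "j < m" for i j
    by (rule integrable_on_mult_right[OF i[OF that]])
  have i2: "(\<lambda>t. \<Sum>j<m. a j * Y i j t) integrable_on S" if "i < n" for i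
    by (rule integrable_sum) (auto intro: i1 that)
  have "integral S (\<lambda>t. \<Sum>i<n. \<Sum>j<m. a j * Y i j t) = (\<Sum>i<n. integral S (\<lambda>t. \<Sum>j<m. a j * Y i j t))"
    by (rule integral_sum) (auto intro: i2)
  also have "\<dots> = (\<Sum>i<n. \<Sum>j<m. integral S (\<lambda>t. a j * Y i j t))"
    by (rule sum.cong[OF refl], rule integral_sum) (auto intro: i1)
  also have "\<dots> = (\<Sum>i<n. \<Sum>j<m. a j * integral S (Y i j))" by simp
  finally show ?thesis by (simp add: sum_distrib_left ac_simps)
qed

theorem lemma2:
  fixes n m :: nat and T :: "hel \<Rightarrow> hel"
  assumes "1 \<le> n" and "1 \<le> m"
    and "bounded_op n m T"
    and "\<forall>F\<in>Hmn n m. Mz'_adj n m (T (Mz' n m F)) =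
           projIm n m (oplus n (combo n m T) (projIm n m F))"
  shows "\<forall>k::int. \<forall>F\<in>Hmn n m. Mz'_adj n m (Tk n m T k (Mz' n m F)) =
           projIm n m (oplus n (combo n m (Tk n m T k)) (projIm n m F))"
proof (intro allI ballI)
  fix k :: int and F assume F: "F \<in> Hmn n m"
  have m: "1 \<le> m" by fact
  have bop: "bounded_op n m T" by fact
  have hyp: "\<forall>F\<in>Hmn n m. Mz'_adj n m (T (Mz' n m F)) = projIm n m (oplus n (combo n m T) (projIm n m F))" by fact
  let ?c = "complex_of_real (1 / (2 * pi))"
  define f0 where "f0 = Mz' n m F"
  have f0: "f0 \<in> Hm n m" unfolding f0_def by (rule Mz'_Hm[OF m F])
  have Tf0: "Tk n m T k f0 \<in> Hm n m" using Tk_prop[OF m bop f0] by blast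
  define L where "L = Mz'_adj n m (Tk n m T k f0)"
  have LH: "L \<in> Hmn n m" unfolding L_def Mz'_adj_eq[OF m Tf0] by (intro vec_Hmn[OF m] delta_Hm[OF m] Tf0)
  define PF where "PF = Pe n m F"
  have PF: "PF \<in> Hmn n m" unfolding PF_def by (rule Pe_Hmn[OF m F])
  define H where "H = oplus n (combo n m (Tk n m T k)) PF"
  have HH: "H \<in> Hmn n m" unfolding H_def by (rule oplus_Hmn[OF m combo_Hm[OF m Tk_maps[OF m bop]] PF])
  define R where "R = Pe n m H"
  have RH: "R \<in> Hmn n m" unfolding R_def by (rule Pe_Hmn[OF m HH])
  have R_eq: "projIm n m (oplus n (combo n m (Tk n m T k)) (projIm n m F)) = R"
    unfolding R_def H_def PF_def projIm_eq[OF m F] by (rule projIm_eq[OF m HH[unfolded H_def PF_def]])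
  have main: "ipHn n m L G = ipHn n m R G" if G: "G \<in> Hmn n m" for G
  proof -
    define PG where "PG = Pe n m G"
    have PG: "PG \<in> Hmn n m" unfolding PG_def by (rule Pe_Hmn[OF m G])
    have MG: "Mz' n m G \<in> Hm n m" by (rule Mz'_Hm[OF m G])
    let ?Y = "\<lambda>i j t. Ek k t * ipH n m ((sigma n m ^^ j) (Wt n m T t) (PF i)) (PG i)"
    have PFi: "PF i \<in> Hm n m" and PGi: "PG i \<in> Hm n m" if "i < n" for i
      using PF PG that by (auto simp: Hmn_def)
    have "ipHn n m L G = ipH n m (Tk n m T k f0) (Mz' n m G)"
      unfolding L_def by (rule ipHn_Mz'adj[OF m Tf0 G])
    also have "\<dots> = ?c * integral {0..2*pi} (\<lambda>t. Ek k t * ipH n m (Wt n m T t f0) (Mz' n m G))"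
      using Tk_prop[OF m bop f0] MG by blast
    also have "\<dots> = ?c * integral {0..2*pi} (\<lambda>t. \<Sum>i<n. \<Sum>j<m. coef m j * ?Y i j t)"
    proof -
      have "Ek k t * ipH n m (Wt n m T t f0) (Mz' n m G) = (\<Sum>i<n. \<Sum>j<m. coef m j * ?Y i j t)" for t
        unfolding f0_def per_t[OF m T_maps[OF m bop] T_hom[OF m bop] hyp F G]
        by (simp add: RS_def PF_def PG_def sum_distrib_left ac_simps)
      thus ?thesis by simp
    qed
    also have "\<dots> = (\<Sum>i<n. \<Sum>j<m. coef m j * (?c * integral {0..2*pi} (?Y i j)))"
      by (rule double_int[symmetric]) (use sig_Tk_all[OF m bop] PFi PGi in blast)
    also have "\<dots> = (\<Sum>i<n. \<Sum>j<m. coef m j * ipH n m ((sigma n m ^^ j) (Tk n m T k) (PF i)) (PG i))"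
      by (intro sum.cong refl) (use sig_Tk_all[OF m bop] PFi PGi in simp)
    also have "\<dots> = RS n m (Tk n m T k) PF PG" by (simp add: RS_def)
    also have "\<dots> = ipHn n m H PG"
      unfolding H_def by (rule ipHn_oplus[OF m Tk_maps[OF m bop] PF PG, symmetric])
    also have "\<dots> = ipHn n m R G" unfolding R_def PG_def by (rule Pe_sa[OF m HH G, symmetric])
    finally show ?thesis .
  qed
  have "L = R"
  proof (rule Hmn_ext2[OF LH RH])
    fix X assume X: "X \<in> Hmn n m"
    show "ipHn n m X L = ipHn n m X R" using main[OF X] ipHn_cnj[of n m X L] ipHn_cnj[of n m X R] by simp
  qed
  thus "Mz'_adj n m (Tk n m T k (Mz' n m F)) = projIm n m (oplus n (combo n m (Tk n m T k)) (projIm n m F))"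
    unfolding R_eq L_def f0_def .
qed

end
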